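(* For the amalgam $\Gamma=G_0*_HG_1$ defined below, $K_0=H(0)$, $K_1=H(1)$, and $\ker\Gamma=K_0\cap K_1=H(0)\cap H(1)=\{e\}$.
   Context: Definition of $\Gamma$: write $\oplus$ for addition mod $2$. Let $H$ be the group with generators $h(i_1,\dots,i_n)$, one for each $n\ge1$ and $(i_1,\dots,i_n)\in\{0,1\}^n$, subject to $h(i_1,\dots,i_n)^2=e$ and, for sequences $(i_1,\dots,i_k)$, $(j_1,\dots,j_n)$ with $n\ge k$: $h(i_1,\dots,i_k)h(j_1,\dots,j_n)h(i_1,\dots,i_k)=h(j_1,\dots,j_k,j_{k+1}\oplus1,j_{k+2},\dots,j_n)$ if $n>k$ and $i_\ell=j_\ell$ for $1\le\ell\le k$, and $=h(j_1,\dots,j_n)$ otherwise. Let $\Gamma$ be generated by the $h$'s and $g_0,g_1$ with the relations of $H$ plus $g_0^2=g_1^2=e$, $(g_0h(1))^3=e$, $(g_1h(0))^3=e$, and for all $n\ge2$, $i_3,\dots,i_n\in\{0,1\}$: $g_0h(1,0,i_3,\dots,i_n)g_0=h(0,i_3,\dots,i_n)$, $g_0h(1,1,i_3,\dots,i_n)g_0=h(1,1,i_3,\dots,i_n)$, $g_1h(0,0,i_3,\dots,i_n)g_1=h(0,0,i_3,\dots,i_n)$, $g_1h(0,1,i_3,\dots,i_n)g_1=h(1,i_3,\dots,i_n)$. With $H\le\Gamma$ the subgroup generated by the $h$'s, $G_0=\langle H\cup\{g_0\}\rangle$, $G_1=\langle H\cup\{g_1\}\rangle$, one has $\Gamma=G_0*_HG_1$.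 For $j\in\{0,1\}$, $H(j)$ is the subgroup of $H$ generated by all $h(j,i_2,\dots,i_n)$, $n\ge1$, $i_2,\dots,i_n\in\{0,1\}$. For an amalgam $G_0*_HG_1$: for $j=0,1$ and $k\ge1$ let $T_{j,k}=\{x_0x_1\cdots x_{k-1}: x_i\in G_{i+j\bmod 2}\setminus H\}$, $T_{j,0}=H$, $C_{j,k}=\bigcap_{g\in T_{j,k}}gHg^{-1}$, $K_j=\bigcap_{k\ge0}C_{j,k}$, and $\ker\Gamma=\bigcap_{g\in\Gamma}gHg^{-1}$. *)

theory Defs
  imports "HOL-Algebra.Algebra"
begin

text \<open>Bits 0,1 are represented by False,True; addition of 1 mod 2 is negation.
  Generator h(i_1,...,i_n) (n \<ge> 1) is represented as Hg i_1 [i_2,...,i_n].\<close>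

datatype gen = Hg bool "bool list" | G0 | G1

fun hgen :: "bool list \<Rightarrow> gen" where
  "hgen (i # is) = Hg i is"
| "hgen [] = Hg False []"  (* never used: all h-indices are nonempty *)

type_synonym letter = "gen \<times> bool"   (* (generator, is_inverse) *)
type_synonym word = "letter list"

definition lt :: "gen \<Rightarrow> letter" where "lt g = (g, False)"
definition ltinv :: "gen \<Rightarrow> letter" where "ltinv g = (g, True)"
definition linv :: "letter \<Rightarrow> letter" where "linv x = (fst x, \<not> snd x)"

text \<open>Right-hand side of the conjugation relation of H:
  h(i) h(j) h(i) for |i| = k \<le> n = |j|.\<close>
definition hconj :: "bool list \<Rightarrow> bool list \<Rightarrow> bool list" where
  "hconj i j = (if length j > length i \<and> take (length i) j = i
                then take (length i) j @ [\<not> j ! length i] @ drop (Suc (length i)) j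
                else j)"

definition relators :: "word set" where
  "relators =
     {[lt (hgen w), lt (hgen w)] | w. w \<noteq> []}
   \<union> {[lt (hgen i), lt (hgen j), lt (hgen i), ltinv (hgen (hconj i j))] | i j.
         i \<noteq> [] \<and> length i \<le> length j}
   \<union> {[lt G0, lt G0], [lt G1, lt G1]}
   \<union> {[lt G0, lt (hgen [True]), lt G0, lt (hgen [True]), lt G0, lt (hgen [True])]}
   \<union> {[lt G1, lt (hgen [False]), lt G1, lt (hgen [False]), lt G1, lt (hgen [False])]}
   \<union> {[lt G0, lt (hgen (True # False # r)), lt G0, ltinv (hgen (False # r))] | r. True}
   \<union> {[lt G0, lt (hgen (True # True # r)), lt G0, ltinv (hgen (True # True # r))] | r. True}
   \<union> {[lt G1, lt (hgen (False # False # r)), lt G1, ltinv (hgen (False # False # r))] | r. True}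
   \<union> {[lt G1, lt (hgen (False # True # r)), lt G1, ltinv (hgen (True # r))] | r. True}"

inductive weq :: "word \<Rightarrow> word \<Rightarrow> bool" where
  weq_refl: "weq w w"
| weq_sym: "weq u v \<Longrightarrow> weq v u"
| weq_trans: "weq u v \<Longrightarrow> weq v w \<Longrightarrow> weq u w"
| weq_cancel: "weq (u @ [x, linv x] @ v) (u @ v)"
| weq_rel: "r \<in> relators \<Longrightarrow> weq (u @ r @ v) (u @ v)"

definition Gamma :: "word set monoid" where
  "Gamma = \<lparr> carrier = UNIV // {(u, v). weq u v},
             monoid.mult = (\<lambda>A B. {w. \<exists>a\<in>A. \<exists>b\<in>B. weq w (a @ b)}),
             monoid.one = {w. weq w []} \<rparr>"

definition gcls :: "gen \<Rightarrow> word set" where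
  "gcls g = {w. weq w [lt g]}"

definition hh :: "bool list \<Rightarrow> word set" where "hh w = gcls (hgen w)"

definition Hs :: "word set set" where
  "Hs = generate Gamma {hh w | w. w \<noteq> []}"

definition Hj :: "bool \<Rightarrow> word set set" where
  "Hj j = generate Gamma {hh (j # r) | r. True}"

definition Gs :: "nat \<Rightarrow> word set set" where
  "Gs j = generate Gamma (Hs \<union> {if j mod 2 = 0 then gcls G0 else gcls G1})"

fun Tprod :: "nat \<Rightarrow> nat \<Rightarrow> word set set" where
  "Tprod j 0 = {\<one>\<^bsub>Gamma\<^esub>}"
| "Tprod j (Suc k) = {x \<otimes>\<^bsub>Gamma\<^esub> y | x y. x \<in> Gs j - Hs \<and> y \<in> Tprod (Suc j) k}"

definition T :: "nat \<Rightarrow> nat \<Rightarrow> word set set" where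
  "T j k = (if k = 0 then Hs else Tprod j k)"

definition conjH :: "word set \<Rightarrow> word set set" where
  "conjH g = {g \<otimes>\<^bsub>Gamma\<^esub> x \<otimes>\<^bsub>Gamma\<^esub> inv\<^bsub>Gamma\<^esub> g | x. x \<in> Hs}"

definition C :: "nat \<Rightarrow> nat \<Rightarrow> word set set" where
  "C j k = (\<Inter>g\<in>T j k. conjH g)"

definition K :: "nat \<Rightarrow> word set set" where
  "K j = (\<Inter>k. C j k)"

definition kerGamma :: "word set set" where
  "kerGamma = (\<Inter>g\<in>carrier Gamma. conjH g)"

end

theory Submission
  imports Defs
begin


lemma weq_ctxt: "weq u v \<Longrightarrow> weq (p @ u @ q) (p @ v @ q)"
proof (induction rule: weq.induct)
  case (weq_refl w) then show ?case by (rule weq.weq_refl)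
next
  case (weq_sym u v) then show ?case using weq.weq_sym by blast
next
  case (weq_trans u v w) then show ?case by (metis weq.weq_trans)
next
  case (weq_cancel u x v)
  have "weq ((p @ u) @ [x, linv x] @ (v @ q)) ((p @ u) @ (v @ q))" by (rule weq.weq_cancel)
  then show ?case by simp
next
  case (weq_rel r u v)
  have "weq ((p @ u) @ r @ (v @ q)) ((p @ u) @ (v @ q))" by (rule weq.weq_rel[OF weq_rel.hyps])
  then show ?case by simp
qed

lemma weq_app: "weq u u' \<Longrightarrow> weq v v' \<Longrightarrow> weq (u @ v) (u' @ v')"
  by (metis weq_ctxt append_Nil append_Nil2 weq_trans)

lemma weq_symp: "weq u v = weq v u" by (metis weq_sym)

definition cls :: "word \<Rightarrow> word set" where "cls w = {u. weq u w}"

lemma cls_eq: "cls u = cls v \<longleftrightarrow> weq u v"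
  unfolding cls_def by (auto dest: weq_trans weq_sym intro: weq_refl)

lemma carrier_Gamma: "carrier Gamma = range cls"
  unfolding Gamma_def quotient_def cls_def by (auto simp: Image_def weq_symp)

lemma mult_cls: "cls a \<otimes>\<^bsub>Gamma\<^esub> cls b = cls (a @ b)"
  unfolding Gamma_def cls_def apply (auto)
  using weq_app weq_trans apply blast
  using weq_refl by blast

lemma one_Gamma: "\<one>\<^bsub>Gamma\<^esub> = cls []"
  unfolding Gamma_def cls_def by simp

definition invw :: "word \<Rightarrow> word" where "invw w = rev (map linv w)"

lemma invw_cancel: "weq (invw w @ w) []"
proof (induction w)
  case Nil then show ?case by (simp add: invw_def weq_refl)
next
  case (Cons x w)
  have "invw (x # w) @ x # w = invw w @ [linv x, x] @ w" by (simp add: invw_def)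
  moreover have "weq (invw w @ [linv x, x] @ w) (invw w @ w)"
  proof -
    have "linv (linv x) = x" by (simp add: linv_def)
    then show ?thesis using weq_cancel[of "invw w" "linv x" w] by simp
  qed
  ultimately show ?case using Cons weq_trans by metis
qed

lemma group_Gamma: "group Gamma"
proof (rule groupI)
  fix x y assume "x \<in> carrier Gamma" "y \<in> carrier Gamma"
  then show "x \<otimes>\<^bsub>Gamma\<^esub> y \<in> carrier Gamma" by (auto simp: carrier_Gamma mult_cls)
next
  show "\<one>\<^bsub>Gamma\<^esub> \<in> carrier Gamma" by (simp add: carrier_Gamma one_Gamma)
next
  fix x y z assume "x \<in> carrier Gamma" "y \<in> carrier Gamma" "z \<in> carrier Gamma"
  then show "x \<otimes>\<^bsub>Gamma\<^esub> y \<otimes>\<^bsub>Gamma\<^esub> z = x \<otimes>\<^bsub>Gamma\<^esub> (y \<otimes>\<^bsub>Gamma\<^esub> z)"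
    by (auto simp: carrier_Gamma mult_cls)
next
  fix x assume "x \<in> carrier Gamma"
  then show "\<one>\<^bsub>Gamma\<^esub> \<otimes>\<^bsub>Gamma\<^esub> x = x" by (auto simp: carrier_Gamma mult_cls one_Gamma)
next
  fix x assume "x \<in> carrier Gamma"
  then obtain w where "x = cls w" by (auto simp: carrier_Gamma)
  then show "\<exists>y\<in>carrier Gamma. y \<otimes>\<^bsub>Gamma\<^esub> x = \<one>\<^bsub>Gamma\<^esub>"
    using invw_cancel by (auto simp: carrier_Gamma mult_cls one_Gamma cls_eq intro!: bexI[of _ "cls (invw w)"])
qed

interpretation Gm: group Gamma by (rule group_Gamma)

lemma inv_cls: "inv\<^bsub>Gamma\<^esub> (cls w) = cls (invw w)"
  by (rule Gm.inv_equality) (auto simp: carrier_Gamma mult_cls one_Gamma cls_eq invw_cancel)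



abbreviation W :: "gen list \<Rightarrow> word" where "W u \<equiv> map lt u"

lemma hgen_surj: "Hg b r = hgen (b # r)" by simp

lemma rel_sq: "[lt g, lt g] \<in> relators"
proof (cases g)
  case (Hg b r) then show ?thesis unfolding relators_def by (auto intro!: exI[of _ "b#r"])
qed (auto simp: relators_def)

lemma weq_relE: "r \<in> relators \<Longrightarrow> weq r []"
  using weq_rel[of r "[]" "[]"] by simp

lemma sq: "weq [lt g, lt g] []" by (rule weq_relE[OF rel_sq])

lemma weq_tr: "weq a b \<Longrightarrow> weq b c \<Longrightarrow> weq a c" by (rule weq_trans)

lemma ltinv_lt: "weq [ltinv g] [lt g]"
proof -
  have "weq ([ltinv g] @ [lt g, lt g] @ []) ([ltinv g] @ [] @ [])" by (rule weq_ctxt[OF sq])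
  then have 1: "weq [ltinv g] [ltinv g, lt g, lt g]" by (simp add: weq_symp)
  have "weq ([] @ [ltinv g, linv (ltinv g)] @ [lt g]) ([] @ [lt g])" by (rule weq_cancel)
  then have "weq [ltinv g, lt g, lt g] [lt g]" by (simp add: ltinv_def linv_def lt_def)
  with 1 show ?thesis by (rule weq_tr)
qed

lemma weq_map: "(\<And>x. x \<in> set u \<Longrightarrow> weq [f x] [g x]) \<Longrightarrow> weq (map f u) (map g u)"
proof (induction u)
  case Nil then show ?case by (simp add: weq_refl)
next
  case (Cons a u)
  then have "weq ([f a] @ map f u) ([g a] @ map g u)" by (intro weq_app) auto
  then show ?case by simp
qed

lemma invw_W: "weq (invw (W u)) (W (rev u))"
proof -
  have "invw (W u) = map ltinv (rev u)" by (simp add: invw_def rev_map linv_def lt_def ltinv_def)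
  then show ?thesis using weq_map[of "rev u" ltinv lt] ltinv_lt by simp
qed

lemma inv_clsW: "inv\<^bsub>Gamma\<^esub> (cls (W u)) = cls (W (rev u))"
  using inv_cls invw_W cls_eq by metis

lemma rel4: "[a, b, c, ltinv d] \<in> relators \<Longrightarrow> weq [a, b, c] [lt d]"
proof -
  assume r: "[a, b, c, ltinv d] \<in> relators"
  have "weq ([a,b,c] @ [] @ []) ([a,b,c] @ [ltinv d, lt d] @ [])"
    using weq_ctxt[of "[ltinv d, lt d]" "[]" "[a,b,c]" "[]"] weq_cancel[of "[]" "ltinv d" "[]"]
    by (simp add: weq_symp linv_def ltinv_def lt_def)
  moreover have "weq ([] @ [a, b, c, ltinv d] @ [lt d]) ([] @ [lt d])" by (rule weq_rel[OF r])
  ultimately show ?thesis by (auto intro: weq_tr)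
qed

lemma conj_move:
  assumes "\<And>x. x \<in> set u \<Longrightarrow> weq (W [l, x, l]) (W (f x))"
  shows "weq (W (l # u)) (W (concat (map f u) @ [l]))"
  using assms
proof (induction u)
  case Nil then show ?case by (simp add: weq_refl)
next
  case (Cons x u)
  have "weq (W [l, x] @ W u) (W [l, x] @ [lt l, lt l] @ W u)"
    using weq_ctxt[OF sq[of l], where p="W [l,x]" and q="W u"] by (simp add: weq_symp)
  also have "W [l, x] @ [lt l, lt l] @ W u = W [l,x,l] @ W (l # u)" by simp
  finally have 1: "weq (W (l # x # u)) (W [l,x,l] @ W (l # u))" by simp
  have "weq (W [l,x,l] @ W (l # u)) (W (f x) @ W (concat (map f u) @ [l]))"
    using Cons by (intro weq_app) auto
  with 1 show ?case by (auto intro: weq_tr)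
qed

lemma conj_word:
  assumes "\<And>x. x \<in> set u \<Longrightarrow> weq (W [l, x, l]) (W (f x))"
  shows "weq (W ([l] @ u @ [l])) (W (concat (map f u)))"
proof -
  have "weq (W (l # u) @ W [l]) (W (concat (map f u) @ [l]) @ W [l])"
    using conj_move[OF assms] by (intro weq_app weq_refl)
  also have "W (concat (map f u) @ [l]) @ W [l] = W (concat (map f u)) @ [lt l, lt l] @ []" by simp
  finally have "weq (W ([l] @ u @ [l])) (W (concat (map f u)) @ [lt l, lt l] @ [])" by simp
  moreover have "weq (W (concat (map f u)) @ [lt l, lt l] @ []) (W (concat (map f u)) @ [] @ [])"
    by (rule weq_ctxt[OF sq])
  ultimately show ?thesis by (auto intro: weq_tr)
qed

lemma commute: "weq (W [a,b,a]) (W [b]) \<Longrightarrow> weq (W [a,b]) (W [b,a])"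
  using conj_move[of "[b]" a "\<lambda>x. [x]"] by simp

lemma W_app: "W (u @ v) = W u @ W v" by simp



definition WS :: "gen set \<Rightarrow> word set set" where "WS A = {cls (W u) | u. set u \<subseteq> A}"

lemma gcls_W: "gcls a = cls (W [a])" by (simp add: gcls_def cls_def)

lemma WS_carrier: "WS A \<subseteq> carrier Gamma" by (auto simp: WS_def carrier_Gamma)

lemma WS_mult: "x \<in> WS A \<Longrightarrow> y \<in> WS A \<Longrightarrow> x \<otimes>\<^bsub>Gamma\<^esub> y \<in> WS A"
  unfolding WS_def by clarsimp (metis W_app mult_cls set_append Un_least)

lemma WS_inv: "x \<in> WS A \<Longrightarrow> inv\<^bsub>Gamma\<^esub> x \<in> WS A"
  unfolding WS_def by (clarsimp simp: inv_clsW) (metis set_rev)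

lemma WS_one: "\<one>\<^bsub>Gamma\<^esub> \<in> WS A"
  unfolding WS_def one_Gamma by (auto intro!: exI[of _ "[]"])

lemma gcls_WS: "a \<in> A \<Longrightarrow> gcls a \<in> WS A"
  unfolding WS_def gcls_W by (rule CollectI, rule exI[of _ "[a]"]) auto

lemma WS_mono: "A \<subseteq> B \<Longrightarrow> WS A \<subseteq> WS B" unfolding WS_def by auto

lemma gen_WS:
  assumes "{gcls a | a. a \<in> A} \<subseteq> SS" "SS \<subseteq> WS A"
  shows "generate Gamma SS = WS A"
proof
  show "generate Gamma SS \<subseteq> WS A"
  proof
    fix x assume "x \<in> generate Gamma SS"
    then show "x \<in> WS A"
      by induction (use assms in \<open>auto intro: WS_one WS_inv WS_mult\<close>)
  qed
next
  show "WS A \<subseteq> generate Gamma SS"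
  proof
    fix x assume "x \<in> WS A"
    then obtain u where x: "x = cls (W u)" and u: "set u \<subseteq> A" by (auto simp: WS_def)
    have "cls (W u) \<in> generate Gamma SS" using u
    proof (induction u)
      case Nil then show ?case using generate.one[of Gamma SS] by (simp add: one_Gamma)
    next
      case (Cons a u)
      have "gcls a \<in> SS" using Cons.prems assms(1) by auto
      then have "cls (W [a]) \<in> generate Gamma SS" by (auto simp: gcls_W intro: generate.incl)
      moreover have "cls (W u) \<in> generate Gamma SS" using Cons by auto
      ultimately have "cls (W [a]) \<otimes>\<^bsub>Gamma\<^esub> cls (W u) \<in> generate Gamma SS" by (rule generate.eng)
      then show ?case by (simp add: mult_cls)
    qed
    then show "x \<in> generate Gamma SS" using x by simp
  qed
qed

definition HA :: "gen set" where "HA = {Hg b r | b r. True}"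
definition HB :: "bool \<Rightarrow> gen set" where "HB b = {Hg b r | r. True}"

lemma hh_Hg: "{hh w | w. w \<noteq> []} = {gcls a | a. a \<in> HA}"
proof (intro equalityI subsetI)
  fix x assume "x \<in> {hh w |w. w \<noteq> []}"
  then obtain w where "x = gcls (hgen w)" "w \<noteq> []" by (auto simp: hh_def)
  then show "x \<in> {gcls a |a. a \<in> HA}" by (cases w) (auto simp: HA_def)
next
  fix x assume "x \<in> {gcls a |a. a \<in> HA}"
  then obtain b r where "x = gcls (hgen (b#r))" by (auto simp: HA_def)
  then show "x \<in> {hh w |w. w \<noteq> []}" unfolding hh_def by blast
qed

lemma Hs_WS: "Hs = WS HA"
  unfolding Hs_def hh_Hg by (rule gen_WS) (auto intro: gcls_WS)

lemma Hj_WS: "Hj b = WS (HB b)"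
proof -
  have "{hh (b # r) | r. True} = {gcls a | a. a \<in> HB b}" unfolding hh_def HB_def by auto
  then show ?thesis unfolding Hj_def
    by (intro gen_WS) (auto intro: gcls_WS)
qed

lemma Gs_WS: "Gs j = WS (HA \<union> {if j mod 2 = 0 then G0 else G1})"
  unfolding Gs_def
proof (rule gen_WS)
  show "{gcls a |a. a \<in> HA \<union> {if j mod 2 = 0 then G0 else G1}} \<subseteq> Hs \<union> {if j mod 2 = 0 then gcls G0 else gcls G1}"
    using Hs_WS by (auto intro: gcls_WS)
  show "Hs \<union> {if j mod 2 = 0 then gcls G0 else gcls G1} \<subseteq> WS (HA \<union> {if j mod 2 = 0 then G0 else G1})"
    using Hs_WS WS_mono[of HA "insert G0 HA"] WS_mono[of HA "insert G1 HA"] by (auto intro: gcls_WS)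
qed



definition scons :: "bool \<Rightarrow> (nat \<Rightarrow> bool) \<Rightarrow> nat \<Rightarrow> bool" where
  "scons a s = (\<lambda>n. case n of 0 \<Rightarrow> a | Suc m \<Rightarrow> s m)"
definition stl :: "(nat \<Rightarrow> bool) \<Rightarrow> nat \<Rightarrow> bool" where "stl s = (\<lambda>n. s (Suc n))"

lemma scons_0[simp]: "scons a s 0 = a" by (simp add: scons_def)
lemma scons_Suc[simp]: "scons a s (Suc n) = s n" by (simp add: scons_def)
lemma stl_scons[simp]: "stl (scons a s) = s" by (simp add: scons_def stl_def)
lemma scons_stl[simp]: "scons (s 0) (stl s) = s" by (auto simp: scons_def stl_def fun_eq_iff split: nat.split)
lemma scons_stl': "s 0 = a \<Longrightarrow> scons a (stl s) = s" using scons_stl[of s] by simp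
lemma scons_inj[simp]: "scons a s = scons b t \<longleftrightarrow> a = b \<and> s = t"
proof
  assume h: "scons a s = scons b t"
  have "scons a s 0 = scons b t 0" "stl (scons a s) = stl (scons b t)" using h by simp_all
  then show "a = b \<and> s = t" by simp
qed simp
lemma stl_Suc: "stl s n = s (Suc n)" by (simp add: stl_def)


fun hact :: "bool list \<Rightarrow> (nat \<Rightarrow> bool) \<Rightarrow> nat \<Rightarrow> bool" where
  "hact [] s = scons (\<not> s 0) (stl s)"
| "hact (a # v) s = (if s 0 = a then scons a (hact v (stl s)) else s)"

definition g0act :: "(nat \<Rightarrow> bool) \<Rightarrow> nat \<Rightarrow> bool" where
  "g0act s = (if \<not> s 0 then scons True (scons False (stl s))
              else if \<not> s (Suc 0) then scons False (stl (stl s)) else s)"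
definition g1act :: "(nat \<Rightarrow> bool) \<Rightarrow> nat \<Rightarrow> bool" where
  "g1act s = (if s 0 then scons False (scons True (stl s))
              else if s (Suc 0) then scons True (stl (stl s)) else s)"

fun gact :: "gen \<Rightarrow> (nat \<Rightarrow> bool) \<Rightarrow> nat \<Rightarrow> bool" where
  "gact (Hg b r) = hact (b # r)"
| "gact G0 = g0act"
| "gact G1 = g1act"

fun wact :: "word \<Rightarrow> (nat \<Rightarrow> bool) \<Rightarrow> nat \<Rightarrow> bool" where
  "wact [] = id"
| "wact (x # w) = gact (fst x) \<circ> wact w"

lemma wact_app: "wact (u @ v) = wact u \<circ> wact v"
  by (induction u) auto

lemma hact_0: "hact (a # v) s 0 = s 0" by auto

lemma hact_inv[simp]: "hact v (hact v s) = s"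
  by (induction v arbitrary: s) (auto simp: scons_stl')

lemma s_expand: "\<exists>a b t. s = scons a (scons b t)"
  by (metis scons_stl)


lemma g0_inv[simp]: "g0act (g0act s) = s"
proof -
  obtain a b t where s: "s = scons a (scons b t)" using s_expand by blast
  show ?thesis unfolding s by (cases a; cases b) (simp_all add: g0act_def)
qed
lemma g1_inv[simp]: "g1act (g1act s) = s"
proof -
  obtain a b t where s: "s = scons a (scons b t)" using s_expand by blast
  show ?thesis unfolding s by (cases a; cases b) (simp_all add: g1act_def)
qed

lemma gact_inv[simp]: "gact g (gact g s) = s" by (cases g) auto

lemma hgen_act: "v \<noteq> [] \<Longrightarrow> gact (hgen v) = hact v" by (cases v) auto

lemma hconj_simps:
  "hconj [] [] = []"
  "hconj [] (b # j) = (\<not> b) # j"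
  "hconj (a # i) [] = []"
  "hconj (a # i) (b # j) = (if a = b then a # hconj i j else b # j)"
  by (auto simp: hconj_def)

lemma hconj_len[simp]: "length (hconj i j) = length j"
  by (auto simp: hconj_def)

lemma hact_hconj: "length i \<le> length j \<Longrightarrow> hact i (hact j (hact i s)) = hact (hconj i j) s"
proof (induction i arbitrary: j s)
  case Nil then show ?case by (cases j) (auto simp: hconj_simps)
next
  case (Cons a i)
  then obtain b j' where j: "j = b # j'" by (cases j) auto
  with Cons show ?case by (auto simp: hconj_simps scons_stl')
qed


lemma hconj_ne: "j \<noteq> [] \<Longrightarrow> hconj i j \<noteq> []"
  using hconj_len[of i j] by (metis length_0_conv)

lemma g0h1: "g0act (hact [True] (g0act (hact [True] (g0act (hact [True] s))))) = s"
proof -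
  obtain a b t where s: "s = scons a (scons b t)" using s_expand by blast
  show ?thesis unfolding s by (cases a; cases b) (simp_all add: g0act_def)
qed
lemma g1h0: "g1act (hact [False] (g1act (hact [False] (g1act (hact [False] s))))) = s"
proof -
  obtain a b t where s: "s = scons a (scons b t)" using s_expand by blast
  show ?thesis unfolding s by (cases a; cases b) (simp_all add: g1act_def)
qed
lemma g0r1: "g0act (hact (True # False # r) (g0act (hact (False # r) s))) = s"
proof -
  obtain a b t where s: "s = scons a (scons b t)" using s_expand by blast
  show ?thesis unfolding s by (cases a; cases b) (simp_all add: g0act_def)
qed
lemma g0r2: "g0act (hact (True # True # r) (g0act (hact (True # True # r) s))) = s"
proof -
  obtain a b t where s: "s = scons a (scons b t)" using s_expand by blast
  show ?thesis unfolding s by (cases a; cases b) (simp_all add: g0act_def)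
qed
lemma g1r1: "g1act (hact (False # False # r) (g1act (hact (False # False # r) s))) = s"
proof -
  obtain a b t where s: "s = scons a (scons b t)" using s_expand by blast
  show ?thesis unfolding s by (cases a; cases b) (simp_all add: g1act_def)
qed
lemma g1r2: "g1act (hact (False # True # r) (g1act (hact (True # r) s))) = s"
proof -
  obtain a b t where s: "s = scons a (scons b t)" using s_expand by blast
  show ?thesis unfolding s by (cases a; cases b) (simp_all add: g1act_def)
qed

lemma rel_act: "r \<in> relators \<Longrightarrow> wact r s = s"
  unfolding relators_def
  apply (elim UnE)
  apply (auto simp: lt_def ltinv_def hgen_act hconj_ne g0h1 g1h0 g0r1 g0r2 g1r1 g1r2 simp del: hact.simps)
  apply (subgoal_tac "j \<noteq> []")
   apply (simp add: hgen_act hconj_ne hact_hconj del: hact.simps)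
  apply auto
  done

lemma weq_act: "weq u v \<Longrightarrow> wact u = wact v"
proof (induction rule: weq.induct)
  case (weq_cancel u x v)
  then show ?case by (simp add: wact_app linv_def fun_eq_iff)
next
  case (weq_rel r u v)
  then show ?case by (simp add: wact_app rel_act fun_eq_iff)
qed auto



fun node :: "gen \<Rightarrow> bool list" where
  "node (Hg b r) = b # r" | "node G0 = []" | "node G1 = []"

lemma node_hgen[simp]: "v \<noteq> [] \<Longrightarrow> node (hgen v) = v" by (cases v) auto

lemma hgen_node: "a \<in> HA \<Longrightarrow> hgen (node a) = a \<and> node a \<noteq> []" by (auto simp: HA_def)
lemma hgen_nodeB: "a \<in> HB b \<Longrightarrow> hgen (node a) = a \<and> node a \<noteq> [] \<and> hd (node a) = b" by (auto simp: HB_def)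

lemma HA_nodes: "set u \<subseteq> HA \<Longrightarrow> u = map hgen (map node u) \<and> (\<forall>v\<in>set (map node u). v \<noteq> [])"
proof (induction u)
  case (Cons a u) then show ?case using hgen_node[of a] by simp
qed simp

lemma HB_nodes: "set u \<subseteq> HB b \<Longrightarrow> u = map hgen (map node u) \<and> (\<forall>v\<in>set (map node u). v \<noteq> [] \<and> hd v = b)"
proof (induction u)
  case (Cons a u) then show ?case using hgen_nodeB[of a b] by simp
qed simp

lemma hgen_HA: "v \<noteq> [] \<Longrightarrow> hgen v \<in> HA" by (cases v) (auto simp: HA_def)
lemma hgen_HB: "v \<noteq> [] \<Longrightarrow> hd v = b \<Longrightarrow> hgen v \<in> HB b" by (cases v) (auto simp: HB_def)

lemma nodes_HA: "\<forall>v\<in>set u. v \<noteq> [] \<Longrightarrow> set (map hgen u) \<subseteq> HA"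
  using hgen_HA by auto

lemma nodes_HB: "\<forall>v\<in>set u. v \<noteq> [] \<and> hd v = b \<Longrightarrow> set (map hgen u) \<subseteq> HB b"
  using hgen_HB by auto

lemma hrel: "i \<noteq> [] \<Longrightarrow> length i \<le> length j \<Longrightarrow> weq (W [hgen i, hgen j, hgen i]) (W [hgen (hconj i j)])"
proof -
  assume a: "i \<noteq> []" "length i \<le> length j"
  have "[lt (hgen i), lt (hgen j), lt (hgen i), ltinv (hgen (hconj i j))] \<in> relators"
    unfolding relators_def using a by blast
  then show ?thesis using rel4 by simp
qed

lemma hmove:
  assumes "v \<noteq> []" "\<forall>w\<in>set u. w \<noteq> [] \<and> length v \<le> length w"
  shows "weq (W (map hgen (v # u))) (W (map hgen (map (hconj v) u @ [v])))"
proof -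
  have "weq (W (hgen v # map hgen u)) (W (concat (map (\<lambda>x. [hgen (hconj v (node x))]) (map hgen u)) @ [hgen v]))"
  proof (rule conj_move)
    fix x assume "x \<in> set (map hgen u)"
    then obtain w where w: "w \<in> set u" "x = hgen w" by auto
    then show "weq (W [hgen v, x, hgen v]) (W [hgen (hconj v (node x))])"
      using assms hrel[of v w] by auto
  qed
  moreover have "concat (map (\<lambda>x. [hgen (hconj v (node x))]) (map hgen u)) = map hgen (map (hconj v) u)"
    using assms(2) by (induction u) auto
  ultimately show ?thesis by simp
qed

definition pref :: "bool list \<Rightarrow> (nat \<Rightarrow> bool) \<Rightarrow> bool" where
  "pref v s = (\<forall>k<length v. s k = v ! k)"

lemma scons_upd: "scons a (s(n := x)) = (scons a s)(Suc n := x)"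
  by (auto simp: scons_def fun_eq_iff split: nat.split)

lemma pref_Cons: "pref (a # v) s = (s 0 = a \<and> pref v (stl s))"
  by (auto simp: pref_def stl_def less_Suc_eq_0_disj)

lemma hact_eq: "hact v s = (if pref v s then s(length v := \<not> s (length v)) else s)"
proof (induction v arbitrary: s)
  case Nil then show ?case by (auto simp: pref_def scons_def stl_def fun_eq_iff split: nat.split)
next
  case (Cons a v)
  show ?case
  proof (cases "s 0 = a")
    case True
    have "scons a (hact v (stl s)) = (if pref (a # v) s then s(length (a#v) := \<not> s (length (a#v))) else s)"
    proof (cases "pref v (stl s)")
      case True
      then have "scons a (hact v (stl s)) = scons a ((stl s)(length v := \<not> stl s (length v)))"
        using Cons.IH[of "stl s"] True by (simp only: if_True)
      also have "\<dots> = (scons a (stl s))(Suc (length v) := \<not> s (Suc (length v)))"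
        by (simp add: scons_upd stl_Suc)
      finally show ?thesis using True \<open>s 0 = a\<close> by (simp add: pref_Cons scons_stl')
    next
      case False
      then show ?thesis using Cons \<open>s 0 = a\<close> by (simp add: pref_Cons scons_stl')
    qed
    then show ?thesis using True by simp
  next
    case False
    then show ?thesis by (simp add: pref_Cons)
  qed
qed



lemma split_level:
  assumes "\<forall>v\<in>set u. v \<noteq> [] \<and> n \<le> length v"
  shows "\<exists>u' t. weq (W (map hgen u)) (W (map hgen (u' @ t)))
     \<and> (\<forall>v\<in>set u'. v \<noteq> [] \<and> n < length v \<and> length v \<in> length ` set u)
     \<and> (\<forall>v\<in>set t. v \<noteq> [] \<and> length v = n)"
  using assms
proof (induction u)
  case Nil show ?case by (intro exI[of _ "[]"]) (auto intro: weq_refl)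
next
  case (Cons v u0)
  then obtain u0' t0 where e: "weq (W (map hgen u0)) (W (map hgen (u0' @ t0)))"
    and u0': "\<forall>w\<in>set u0'. w \<noteq> [] \<and> n < length w \<and> length w \<in> length ` set u0"
    and t0: "\<forall>w\<in>set t0. w \<noteq> [] \<and> length w = n" by auto
  have e1: "weq (W (map hgen (v # u0))) ([lt (hgen v)] @ W (map hgen (u0' @ t0)))"
    using weq_app[OF weq_refl[of "[lt (hgen v)]"] e] by simp
  show ?case
  proof (cases "n < length v")
    case True
    show ?thesis
      by (rule exI[of _ "v # u0'"], rule exI[of _ t0]) (use e1 True Cons.prems u0' t0 in auto)
  next
    case False
    then have lv: "length v = n" using Cons.prems by auto
    have "weq (W (map hgen (v # u0'))) (W (map hgen (map (hconj v) u0' @ [v])))"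
      by (rule hmove) (use Cons.prems u0' lv in auto)
    then have "weq (W (map hgen (v # u0')) @ W (map hgen t0)) (W (map hgen (map (hconj v) u0' @ [v])) @ W (map hgen t0))"
      by (rule weq_app[OF _ weq_refl])
    then have "weq (W (map hgen (v # u0))) (W (map hgen (map (hconj v) u0' @ (v # t0))))"
      using e1 weq_trans by fastforce
    moreover have "\<forall>w\<in>set (map (hconj v) u0'). w \<noteq> [] \<and> n < length w \<and> length w \<in> length ` set (v # u0)"
      using u0' hconj_ne by auto
    moreover have "\<forall>w\<in>set (v # t0). w \<noteq> [] \<and> length w = n" using t0 lv Cons.prems by auto
    ultimately show ?thesis by blast
  qed
qed

lemma pref_upd: "length v \<le> n \<Longrightarrow> pref v (s(n := x)) = pref v s"
  by (auto simp: pref_def)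

lemma same_level_act:
  assumes "\<forall>v\<in>set t. v \<noteq> [] \<and> length v = n"
  shows "wact (W (map hgen t)) s = (if odd (length (filter (\<lambda>v. pref v s) t)) then s(n := \<not> s n) else s)"
  using assms
proof (induction t)
  case Nil then show ?case by simp
next
  case (Cons v t)
  then have IH: "wact (W (map hgen t)) s = (if odd (length (filter (\<lambda>v. pref v s) t)) then s(n := \<not> s n) else s)"
    and v: "v \<noteq> []" "length v = n" by auto
  have "wact (W (map hgen (v # t))) s = hact v (wact (W (map hgen t)) s)"
    using v by (simp add: lt_def hgen_act)
  also have "\<dots> = (if pref v (wact (W (map hgen t)) s) then (wact (W (map hgen t)) s)(n := \<not> (wact (W (map hgen t)) s) n) else wact (W (map hgen t)) s)"
    using v by (simp only: hact_eq)
  also have "pref v (wact (W (map hgen t)) s) = pref v s" using IH v by (simp add: pref_upd)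
  finally show ?case using IH by (cases "pref v s") auto
qed

lemma bits_fixed:
  assumes "\<forall>v\<in>set u. v \<noteq> [] \<and> n < length v" "k \<le> n"
  shows "wact (W (map hgen u)) y k = y k"
  using assms(1)
proof (induction u)
  case (Cons v u)
  then show ?case using assms(2) by (simp add: lt_def hgen_act hact_eq)
qed simp

lemma even_cancel:
  assumes "\<forall>v\<in>set t. v \<noteq> [] \<and> length v = n" "\<forall>v. even (length (filter ((=) v) t))"
  shows "weq (W (map hgen t)) []"
  using assms
proof (induction "length t" arbitrary: t rule: less_induct)
  case less
  show ?case
  proof (cases t)
    case Nil then show ?thesis by (simp add: weq_refl)
  next
    case (Cons v t')
    have "odd (length (filter ((=) v) t'))" using less.prems(2) Cons
      by (metis (mono_tags) filter.simps(2) length_Cons even_Suc)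
    then have "v \<in> set t'" by (metis empty_filter_conv even_zero length_0_conv)
    then obtain a b where t': "t' = a @ v # b" by (meson split_list)
    have hv: "\<forall>w\<in>set a. hconj v w = w" using less.prems(1) Cons t' by (auto simp: hconj_def)
    have "weq (W (map hgen (v # a))) (W (map hgen (map (hconj v) a @ [v])))"
      by (rule hmove) (use less.prems(1) Cons t' in auto)
    also have "map (hconj v) a = a" using hv by (induction a) auto
    finally have 1: "weq (W (map hgen (v # a))) (W (map hgen a) @ [lt (hgen v)])" by simp
    have "W (map hgen t) = W (map hgen (v # a)) @ [lt (hgen v)] @ W (map hgen b)" using Cons t' by simp
    moreover have "weq (W (map hgen (v # a)) @ [lt (hgen v)] @ W (map hgen b)) ((W (map hgen a) @ [lt (hgen v)]) @ [lt (hgen v)] @ W (map hgen b))"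
      by (rule weq_app[OF 1 weq_refl])
    moreover have "weq (W (map hgen a) @ [lt (hgen v), lt (hgen v)] @ W (map hgen b)) (W (map hgen a) @ [] @ W (map hgen b))"
      by (rule weq_ctxt[OF sq])
    ultimately have 2: "weq (W (map hgen t)) (W (map hgen (a @ b)))" by (auto intro: weq_trans)
    have 3: "weq (W (map hgen (a @ b))) []"
    proof (rule less.hyps)
      show "length (a @ b) < length t" using Cons t' by simp
      show "\<forall>v\<in>set (a @ b). v \<noteq> [] \<and> length v = n" using less.prems(1) Cons t' by auto
      show "\<forall>w. even (length (filter ((=) w) (a @ b)))"
      proof
        fix w
        have "length (filter ((=) w) t) = length (filter ((=) w) (a @ b)) + (if w = v then 2 else 0)"
          using Cons t' by auto
        then show "even (length (filter ((=) w) (a @ b)))" using less.prems(2)[rule_format, of w]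
          by (cases "w = v") auto
      qed
    qed
    from 2 3 show ?thesis by (rule weq_trans)
  qed
qed



lemma weq_W_app: "weq (W u) (W u') \<Longrightarrow> weq (W v) (W v') \<Longrightarrow> weq (W (u @ v)) (W (u' @ v'))"
  using weq_app by simp

lemma pref_sv: "length v = n \<Longrightarrow> length w = n \<Longrightarrow> pref w (\<lambda>k. if k < n then v ! k else False) = (v = w)"
  unfolding pref_def by (auto simp: list_eq_iff_nth_eq)

lemma evencount:
  assumes t: "\<forall>v\<in>set t. v \<noteq> [] \<and> length v = n" and tid: "\<And>s. wact (W (map hgen t)) s = s"
   and True: "length v = n"
  shows "even (length (filter ((=) v) t))"
proof -
          define sv where "sv = (\<lambda>k. if k < n then v ! k else False)"
          have 1: "filter (\<lambda>w. pref w sv) t = filter ((=) v) t"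
          proof (rule filter_cong[OF refl])
            fix w assume "w \<in> set t"
            then have "length w = n" using t by auto
            show "pref w sv = (v = w)"
              unfolding sv_def by (rule pref_sv[OF True \<open>length w = n\<close>])
          qed
          have 2: "\<not> odd (length (filter (\<lambda>w. pref w sv) t))"
          proof
            assume o: "odd (length (filter (\<lambda>w. pref w sv) t))"
            have eq: "wact (W (map hgen t)) sv = sv(n := \<not> sv n)" using same_level_act[OF t, of sv] o by simp
            have h: "sv(n := \<not> sv n) = sv" using tid[of sv] unfolding eq .
            show False using fun_cong[OF h, of n] by simp
          qed
          show ?thesis using 1 2 by simp
qed

lemma faithful_aux:
  "\<forall>n u. 1 \<le> n \<longrightarrow> (\<forall>v\<in>set u. v \<noteq> [] \<and> n \<le> length v \<and> length v < n + d)
     \<longrightarrow> wact (W (map hgen u)) = id \<longrightarrow> weq (W (map hgen u)) []"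
proof (induction d)
  case 0
  show ?case
  proof (intro allI impI)
    fix n :: nat and u :: "bool list list" assume "\<forall>v\<in>set u. v \<noteq> [] \<and> n \<le> length v \<and> length v < n + 0"
    then have "u = []" by (cases u) auto
    then show "weq (W (map hgen u)) []" by (simp add: weq_refl)
  qed
next
  case (Suc d)
  show ?case
  proof (intro allI impI)
    fix n :: nat and u :: "bool list list" assume n: "1 \<le> n" and u: "\<forall>v\<in>set u. v \<noteq> [] \<and> n \<le> length v \<and> length v < n + Suc d"
      and act: "wact (W (map hgen u)) = id"
    have "\<forall>v\<in>set u. v \<noteq> [] \<and> n \<le> length v" using u by auto
    from split_level[OF this] obtain u' t where e: "weq (W (map hgen u)) (W (map hgen (u' @ t)))"
      and u': "\<forall>v\<in>set u'. v \<noteq> [] \<and> n < length v \<and> length v \<in> length ` set u"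
      and t: "\<forall>v\<in>set t. v \<noteq> [] \<and> length v = n"
      by blast
    have act2: "wact (W (map hgen u')) \<circ> wact (W (map hgen t)) = id"
    proof -
      have "wact (W (map hgen u')) \<circ> wact (W (map hgen t)) = wact (W (map hgen (u' @ t)))"
        by (simp only: map_append wact_app)
      also have "\<dots> = wact (W (map hgen u))" using weq_act[OF e] by (rule sym)
      finally show ?thesis using act by simp
    qed
    have tid: "wact (W (map hgen t)) s = s" for s
    proof -
      have fix1: "wact (W (map hgen u')) y n = y n" for y
        using bits_fixed[of u' n n y] u' by auto
      have "wact (W (map hgen u')) (wact (W (map hgen t)) s) = s" using act2 by (simp add: fun_eq_iff)
      then have "wact (W (map hgen t)) s n = s n" using fix1 by metis
      then show ?thesis using same_level_act[OF t, of s] by (auto split: if_splits)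
    qed
    have "weq (W (map hgen t)) []"
    proof (rule even_cancel[OF t])
      show "\<forall>v. even (length (filter ((=) v) t))"
      proof
        fix v
        show "even (length (filter ((=) v) t))"
        proof (cases "length v = n")
          case False
          then have "filter ((=) v) t = []" using t by (auto simp: filter_empty_conv)
          then show ?thesis by simp
        next
          case True
          show ?thesis by (rule evencount[OF t tid True])
        qed
      qed
    qed
    then have e2: "weq (W (map hgen (u' @ t))) (W (map hgen u'))"
      using weq_W_app[OF weq_refl[of "W (map hgen u')"], of "map hgen t" "[]"] by simp
    have act3: "wact (W (map hgen u')) = id"
    proof
      fix s
      have "wact (W (map hgen u')) (wact (W (map hgen t)) s) = s"
        using fun_cong[OF act2, of s] by (simp only: comp_apply id_apply)
      then show "wact (W (map hgen u')) s = id s" by (simp only: tid id_apply)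
    qed
    have bnd: "\<forall>v\<in>set u'. v \<noteq> [] \<and> Suc n \<le> length v \<and> length v < Suc n + d"
    proof
      fix v assume v: "v \<in> set u'"
      have "length v \<in> length ` set u" using u' v by blast
      then obtain w where w: "w \<in> set u" "length v = length w" by blast
      then have "length w < n + Suc d" using u by auto
      then show "v \<noteq> [] \<and> Suc n \<le> length v \<and> length v < Suc n + d" using u' v w by auto
    qed
    have "1 \<le> Suc n \<longrightarrow> (\<forall>v\<in>set u'. v \<noteq> [] \<and> Suc n \<le> length v \<and> length v < Suc n + d)
     \<longrightarrow> wact (W (map hgen u')) = id \<longrightarrow> weq (W (map hgen u')) []"
      using Suc.IH by blast
    then have "weq (W (map hgen u')) []" using bnd act3 by simp
    then show "weq (W (map hgen u)) []" by (rule weq_trans[OF weq_trans[OF e e2]])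
  qed
qed

lemma faithful:
  assumes "\<forall>v\<in>set u. v \<noteq> []" "wact (W (map hgen u)) = id"
  shows "weq (W (map hgen u)) []"
proof -
  have "\<forall>v\<in>set u. v \<noteq> [] \<and> 1 \<le> length v \<and> length v < 1 + sum_list (map length u)"
  proof
    fix v assume v: "v \<in> set u"
    then have "length v \<in> set (map length u)" by simp
    then have "length v \<le> sum_list (map length u)" by (rule member_le_sum_list) auto
    moreover have "v \<noteq> []" using v assms(1) by auto
    ultimately show "v \<noteq> [] \<and> 1 \<le> length v \<and> length v < 1 + sum_list (map length u)"
      by (cases v) auto
  qed
  then show ?thesis using faithful_aux[rule_format, of 1 u] assms(2) by auto
qed



lemma hconj_hd: "v \<noteq> [] \<Longrightarrow> w \<noteq> [] \<Longrightarrow> hd v \<noteq> hd w \<Longrightarrow> hconj v w = w"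
  by (cases v; cases w) (auto simp: hconj_simps)

lemma hcomm:
  assumes "v \<noteq> []" "w \<noteq> []" "hd v \<noteq> hd w"
  shows "weq (W [hgen v, hgen w]) (W [hgen w, hgen v])"
proof (cases "length v \<le> length w")
  case True
  have "weq (W [hgen v, hgen w, hgen v]) (W [hgen w])"
    using hrel[OF assms(1) True] hconj_hd[OF assms] by simp
  then show ?thesis by (rule commute)
next
  case False
  have "weq (W [hgen w, hgen v, hgen w]) (W [hgen v])"
    using hrel[OF assms(2), of v] False hconj_hd[OF assms(2,1)] assms(3) by simp
  then have "weq (W [hgen w, hgen v]) (W [hgen v, hgen w])" by (rule commute)
  then show ?thesis by (rule weq_sym)
qed

lemma pass:
  assumes "v \<noteq> []" "\<forall>w\<in>set u. w \<noteq> [] \<and> hd w \<noteq> hd v"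
  shows "weq (W (map hgen (v # u))) (W (map hgen (u @ [v])))"
  using assms(2)
proof (induction u)
  case Nil then show ?case by (simp add: weq_refl)
next
  case (Cons w u)
  have 1: "weq (W [hgen v, hgen w] @ W (map hgen u)) (W [hgen w, hgen v] @ W (map hgen u))"
    by (rule weq_app[OF hcomm weq_refl]) (use assms Cons.prems in auto)
  have 2: "weq ([lt (hgen w)] @ W (map hgen (v # u))) ([lt (hgen w)] @ W (map hgen (u @ [v])))"
    by (rule weq_app[OF weq_refl]) (use Cons in auto)
  from 1 2 show ?case by (auto intro: weq_trans)
qed

lemma decomp:
  assumes "\<forall>v\<in>set u. v \<noteq> []"
  shows "\<exists>ua ub. weq (W (map hgen u)) (W (map hgen (ua @ ub))) \<and> (\<forall>v\<in>set ua. v \<noteq> [] \<and> hd v = a)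
     \<and> (\<forall>v\<in>set ub. v \<noteq> [] \<and> hd v = (\<not> a))"
  using assms
proof (induction u)
  case Nil show ?case by (intro exI[of _ "[]"]) (auto intro: weq_refl)
next
  case (Cons v u)
  then obtain ua ub where e: "weq (W (map hgen u)) (W (map hgen (ua @ ub)))"
    and ua: "\<forall>v\<in>set ua. v \<noteq> [] \<and> hd v = a" and ub: "\<forall>v\<in>set ub. v \<noteq> [] \<and> hd v = (\<not> a)" by auto
  have e1: "weq (W (map hgen (v # u))) ([lt (hgen v)] @ W (map hgen (ua @ ub)))"
    using weq_app[OF weq_refl[of "[lt (hgen v)]"] e] by simp
  show ?case
  proof (cases "hd v = a")
    case True
    show ?thesis
      by (rule exI[of _ "v # ua"], rule exI[of _ ub]) (use e1 True Cons.prems ua ub in auto)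
  next
    case False
    have "weq (W (map hgen (v # ua)) @ W (map hgen ub)) (W (map hgen (ua @ [v])) @ W (map hgen ub))"
      by (rule weq_app[OF pass weq_refl]) (use Cons.prems ua False in auto)
    then have "weq (W (map hgen (v # u))) (W (map hgen (ua @ (v # ub))))"
      using e1 weq_trans by fastforce
    moreover have "\<forall>w\<in>set (v # ub). w \<noteq> [] \<and> hd w = (\<not> a)" using ub False Cons.prems by auto
    ultimately show ?thesis using ua by blast
  qed
qed

lemma act_other:
  assumes "\<forall>v\<in>set u. v \<noteq> [] \<and> hd v = b" "s 0 \<noteq> b"
  shows "wact (W (map hgen u)) s = s"
  using assms(1)
proof (induction u)
  case (Cons v u)
  then obtain c r where v: "v = c # r" "c = b" by (cases v) auto
  then show ?case using Cons assms(2) by (simp add: lt_def)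
qed simp

lemma act_bit0:
  assumes "\<forall>v\<in>set u. v \<noteq> []"
  shows "wact (W (map hgen u)) s 0 = s 0"
  using assms
proof (induction u)
  case (Cons v u)
  then obtain c r where v: "v = c # r" by (cases v) auto
  then show ?case using Cons by (simp add: lt_def)
qed simp

lemma Hs_nodes: "x \<in> Hs \<Longrightarrow> \<exists>u. x = cls (W (map hgen u)) \<and> (\<forall>v\<in>set u. v \<noteq> [])"
  unfolding Hs_WS WS_def using HA_nodes by (smt (verit) mem_Collect_eq)

lemma Hj_nodes: "x \<in> Hj b \<Longrightarrow> \<exists>u. x = cls (W (map hgen u)) \<and> (\<forall>v\<in>set u. v \<noteq> [] \<and> hd v = b)"
  unfolding Hj_WS WS_def using HB_nodes by (smt (verit) mem_Collect_eq)

lemma nodes_Hs: "\<forall>v\<in>set u. v \<noteq> [] \<Longrightarrow> cls (W (map hgen u)) \<in> Hs"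
  unfolding Hs_WS WS_def using nodes_HA by blast

lemma nodes_Hj: "\<forall>v\<in>set u. v \<noteq> [] \<and> hd v = b \<Longrightarrow> cls (W (map hgen u)) \<in> Hj b"
  unfolding Hj_WS WS_def using nodes_HB by blast

lemma Hs_bit0: "x \<in> Hs \<Longrightarrow> x = cls w \<Longrightarrow> wact w s 0 = s 0"
  using Hs_nodes act_bit0 cls_eq weq_act by metis



lemma weq_cls: "weq u v \<Longrightarrow> cls u = cls v" using cls_eq by blast

lemma Hj_inter: "Hj False \<inter> Hj True = {\<one>\<^bsub>Gamma\<^esub>}"
proof
  show "{\<one>\<^bsub>Gamma\<^esub>} \<subseteq> Hj False \<inter> Hj True"
    using nodes_Hj[of "[]"] by (simp add: one_Gamma)
next
  show "Hj False \<inter> Hj True \<subseteq> {\<one>\<^bsub>Gamma\<^esub>}"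
  proof
    fix y assume y: "y \<in> Hj False \<inter> Hj True"
    obtain u0 where u0: "y = cls (W (map hgen u0))" "\<forall>v\<in>set u0. v \<noteq> [] \<and> hd v = False"
      using Hj_nodes y by blast
    obtain u1 where u1: "y = cls (W (map hgen u1))" "\<forall>v\<in>set u1. v \<noteq> [] \<and> hd v = True"
      using Hj_nodes y by blast
    have same: "wact (W (map hgen u0)) = wact (W (map hgen u1))"
      using u0(1) u1(1) cls_eq weq_act by metis
    have "wact (W (map hgen u0)) = id"
    proof
      fix s show "wact (W (map hgen u0)) s = id s"
      proof (cases "s 0")
        case True then show ?thesis using act_other[OF u0(2)] by simp
      next
        case False then show ?thesis using act_other[OF u1(2)] same by simp
      qed
    qed
    then have "weq (W (map hgen u0)) []" using faithful u0(2) by blast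
    then show "y \<in> {\<one>\<^bsub>Gamma\<^esub>}" using u0(1) weq_cls by (simp add: one_Gamma)
  qed
qed

lemma Hj_of_trivial:
  assumes y: "y \<in> Hs" and triv: "\<And>w s. y = cls w \<Longrightarrow> s 0 = (\<not> b) \<Longrightarrow> wact w s = s"
  shows "y \<in> Hj b"
proof -
  obtain u where u: "y = cls (W (map hgen u))" "\<forall>v\<in>set u. v \<noteq> []" using Hs_nodes y by blast
  obtain ua ub where e: "weq (W (map hgen u)) (W (map hgen (ua @ ub)))"
    and ua: "\<forall>v\<in>set ua. v \<noteq> [] \<and> hd v = (\<not> b)" and ub: "\<forall>v\<in>set ub. v \<noteq> [] \<and> hd v = (\<not> \<not> b)"
    using decomp[OF u(2), of "\<not> b"] by blast
  have ub': "\<forall>v\<in>set ub. v \<noteq> [] \<and> hd v = b" using ub by simp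
  have wa: "wact (W (map hgen u)) = wact (W (map hgen ua)) \<circ> wact (W (map hgen ub))"
    using weq_act[OF e] by (simp only: map_append wact_app)
  have "wact (W (map hgen ua)) = id"
  proof
    fix s show "wact (W (map hgen ua)) s = id s"
    proof (cases "s 0 = b")
      case True then show ?thesis using act_other[OF ua, of s] by simp
    next
      case False
      then have "wact (W (map hgen u)) s = s" using triv[OF u(1)] by simp
      moreover have "wact (W (map hgen ub)) s = s" using act_other[OF ub'] False by simp
      ultimately show ?thesis using wa by simp
    qed
  qed
  then have "weq (W (map hgen ua)) []" using faithful ua by blast
  then have "weq (W (map hgen ua) @ W (map hgen ub)) ([] @ W (map hgen ub))"
    by (rule weq_app[OF _ weq_refl])
  then have "y = cls (W (map hgen ub))" using e u(1) weq_cls weq_trans by fastforce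
  then show ?thesis using nodes_Hj[OF ub'] by simp
qed



abbreviation h1 :: gen where "h1 \<equiv> Hg True []"

definition Mset :: "gen set" where "Mset = {g. g \<in> HA \<and> g \<noteq> h1}"

declare weq_trans[trans]

lemma weq_cong3: "weq (W b) (W b') \<Longrightarrow> weq (W (a @ b @ c)) (W (a @ b' @ c))"
  using weq_ctxt[of "W b" "W b'" "W a" "W c"] by simp

lemma weq_sq_del: "weq (W (a @ [g, g] @ c)) (W (a @ c))"
  using weq_ctxt[OF sq[of g], of "W a" "W c"] by simp

lemma weq_sq_ins: "weq (W (a @ c)) (W (a @ [g, g] @ c))"
  using weq_sq_del weq_sym by blast

lemma conj_inv: "weq (W [a, x, a]) (W [y]) \<Longrightarrow> weq (W [a, y, a]) (W [x])"
proof -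
  assume h: "weq (W [a, x, a]) (W [y])"
  have "weq (W ([a] @ [y] @ [a])) (W ([a] @ [a, x, a] @ [a]))" using weq_cong3[OF h] weq_sym by blast
  also have "W ([a] @ [a, x, a] @ [a]) = W ([] @ [a, a] @ ([x] @ [a, a] @ []))" by simp
  also have "weq \<dots> (W ([] @ [x] @ [a, a] @ []))" by (rule weq_sq_del)
  also have "W ([] @ [x] @ [a, a] @ []) = W ([x] @ [a, a] @ [])" by simp
  also have "weq \<dots> (W ([x] @ []))" by (rule weq_sq_del)
  finally show ?thesis by simp
qed

lemma rel_G0_10: "weq (W [G0, hgen (True # False # r), G0]) (W [hgen (False # r)])"
  by (simp, rule rel4) (auto simp: relators_def)
lemma rel_G0_11: "weq (W [G0, hgen (True # True # r), G0]) (W [hgen (True # True # r)])"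
  by (simp, rule rel4) (auto simp: relators_def)
lemma rel_G0_0: "weq (W [G0, hgen (False # r), G0]) (W [hgen (True # False # r)])"
  by (rule conj_inv[OF rel_G0_10])
lemma rel_G1_00: "weq (W [G1, hgen (False # False # r), G1]) (W [hgen (False # False # r)])"
  by (simp, rule rel4) (auto simp: relators_def)
lemma rel_G1_01: "weq (W [G1, hgen (False # True # r), G1]) (W [hgen (True # r)])"
  by (simp, rule rel4) (auto simp: relators_def)

lemma rel_g0h1_3: "weq (W [G0, h1, G0, h1, G0, h1]) (W [])"
proof -
  have "[lt G0, lt (hgen [True]), lt G0, lt (hgen [True]), lt G0, lt (hgen [True])] \<in> relators"
    unfolding relators_def by blast
  then show ?thesis using weq_relE by simp
qed

lemma rev_cancel: "weq (W (x @ rev x)) (W [])"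
proof (induction x)
  case Nil then show ?case by (simp add: weq_refl)
next
  case (Cons a x)
  have "W ((a # x) @ rev (a # x)) = W ([a] @ (x @ rev x) @ [a])" by simp
  also have "weq \<dots> (W ([a] @ [] @ [a]))" by (rule weq_cong3[OF Cons])
  also have "W ([a] @ [] @ [a]) = W ([] @ [a, a] @ [])" by simp
  also have "weq \<dots> (W ([] @ []))" by (rule weq_sq_del)
  finally show ?case by simp
qed

lemma rev_cancel': "weq (W (rev x @ x)) (W [])"
  using rev_cancel[of "rev x"] by simp

lemma weq_del: "weq (W b) (W []) \<Longrightarrow> weq (W (a @ b @ c)) (W (a @ c))"
  using weq_cong3[of b "[]" a c] by simp

lemma weq_ins: "weq (W b) (W []) \<Longrightarrow> weq (W (a @ c)) (W (a @ b @ c))"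
  using weq_del weq_sym by blast

lemma rel_A: "weq (W [G0, h1, G0]) (W [h1, G0, h1])"
proof -
  have "weq (W ([G0, h1, G0] @ [])) (W ([G0, h1, G0] @ ([h1, G0, h1] @ rev [h1, G0, h1]) @ []))"
    by (rule weq_ins[OF rev_cancel])
  also have "W ([G0, h1, G0] @ ([h1, G0, h1] @ rev [h1, G0, h1]) @ []) = W ([] @ [G0, h1, G0, h1, G0, h1] @ [h1, G0, h1])" by simp
  also have "weq \<dots> (W ([] @ [h1, G0, h1]))" by (rule weq_del[OF rel_g0h1_3])
  finally show ?thesis by simp
qed

lemma rel_B: "weq (W [G0, h1, G0, h1]) (W [h1, G0])"
proof -
  have "weq (W ([G0, h1, G0, h1] @ [])) (W ([G0, h1, G0, h1] @ ([G0, h1] @ rev [G0, h1]) @ []))"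
    by (rule weq_ins[OF rev_cancel])
  also have "W ([G0, h1, G0, h1] @ ([G0, h1] @ rev [G0, h1]) @ []) = W ([] @ [G0, h1, G0, h1, G0, h1] @ [h1, G0])" by simp
  also have "weq \<dots> (W ([] @ [h1, G0]))" by (rule weq_del[OF rel_g0h1_3])
  finally show ?thesis by simp
qed


definition f1 :: "gen \<Rightarrow> gen" where "f1 x = hgen (hconj [True] (node x))"
definition f0 :: "gen \<Rightarrow> gen" where
  "f0 x = (case node x of False # r \<Rightarrow> hgen (True # False # r) | True # False # r \<Rightarrow> hgen (False # r) | _ \<Rightarrow> x)"

lemma Mset_cases: "x \<in> Mset \<Longrightarrow> (\<exists>r. x = Hg False r) \<or> (\<exists>c r. x = Hg True (c # r))"
  unfolding Mset_def HA_def by (auto simp: neq_Nil_conv)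

lemma M_f1: "x \<in> Mset \<Longrightarrow> f1 x \<in> Mset \<and> weq (W [h1, x, h1]) (W [f1 x])"
proof -
  assume x: "x \<in> Mset"
  then obtain b r where xb: "x = Hg b r" by (auto simp: Mset_def HA_def)
  have "weq (W [hgen [True], hgen (b # r), hgen [True]]) (W [hgen (hconj [True] (b # r))])"
    by (rule hrel) auto
  moreover have "f1 x \<in> Mset"
    using Mset_cases[OF x] by (auto simp: f1_def hconj_simps Mset_def HA_def)
  ultimately show ?thesis using xb by (simp add: f1_def)
qed

lemma M_f0: "x \<in> Mset \<Longrightarrow> f0 x \<in> Mset \<and> weq (W [G0, x, G0]) (W [f0 x])"
proof -
  assume x: "x \<in> Mset"
  from Mset_cases[OF x] show ?thesis
  proof
    assume "\<exists>r. x = Hg False r"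
    then obtain r where xr: "x = Hg False r" by blast
    show ?thesis using rel_G0_0[of r] xr by (auto simp: f0_def Mset_def HA_def)
  next
    assume "\<exists>c r. x = Hg True (c # r)"
    then obtain c r where xr: "x = Hg True (c # r)" by blast
    show ?thesis
    proof (cases c)
      case True
      then show ?thesis using rel_G0_11[of r] xr x by (simp add: f0_def)
    next
      case False
      then show ?thesis using rel_G0_10[of r] xr by (auto simp: f0_def Mset_def HA_def)
    qed
  qed
qed

definition S6 :: "gen list set" where
  "S6 = {[], [h1], [G0], [h1, G0], [G0, h1], [h1, G0, h1]}"

lemma S6_step: "l \<in> {h1, G0} \<Longrightarrow> s \<in> S6 \<Longrightarrow> \<exists>s'\<in>S6. weq (W (l # s)) (W s')"
proof -
  assume l: "l \<in> {h1, G0}" and s: "s \<in> S6"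
  have d: "weq (W ([] @ [g, g] @ c)) (W ([] @ c))" for g c by (rule weq_sq_del)
  show ?thesis using l s unfolding S6_def
    apply (elim insertE emptyE; simp only:)
    using weq_refl d[of h1 "[]"] d[of h1 "[G0]"] d[of h1 "[G0, h1]"] d[of G0 "[]"] d[of G0 "[h1]"] rel_A rel_B
    by (auto intro: bexI)
qed

lemma G0_decomp:
  "set w \<subseteq> insert G0 HA \<Longrightarrow> \<exists>m s. weq (W w) (W (m @ s)) \<and> set m \<subseteq> Mset \<and> s \<in> S6"
proof (induction w)
  case Nil show ?case by (rule exI[of _ "[]"], rule exI[of _ "[]"]) (auto simp: S6_def intro: weq_refl)
next
  case (Cons l w0)
  then obtain m s where e: "weq (W w0) (W (m @ s))" and m: "set m \<subseteq> Mset" and s: "s \<in> S6" by auto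
  have e1: "weq (W (l # w0)) (W (l # m @ s))"
    using weq_app[OF weq_refl[of "[lt l]"] e] by simp
  have lc: "l = h1 \<or> l = G0 \<or> l \<in> Mset" using Cons.prems by (auto simp: Mset_def)
  show ?case
  proof (cases "l \<in> Mset")
    case True
    show ?thesis by (rule exI[of _ "l # m"], rule exI[of _ s]) (use e1 True m s in auto)
  next
    case False
    then have l2: "l \<in> {h1, G0}" using lc by auto
    define f where "f = (if l = h1 then f1 else f0)"
    have fM: "\<And>x. x \<in> Mset \<Longrightarrow> f x \<in> Mset \<and> weq (W [l, x, l]) (W [f x])"
      using l2 M_f1 M_f0 by (auto simp: f_def)
    have "weq (W (l # m)) (W (concat (map (\<lambda>x. [f x]) m) @ [l]))"
      by (rule conj_move) (use fM m in auto)
    then have mv: "weq (W (l # m)) (W (map f m @ [l]))" by (simp add: concat_map_singleton)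
    obtain s' where s': "s' \<in> S6" "weq (W (l # s)) (W s')" using S6_step[OF l2 s] by blast
    have "weq (W (l # m @ s)) (W ((map f m @ [l]) @ s))"
      using weq_app[OF mv weq_refl[of "W s"]] by simp
    also have "W ((map f m @ [l]) @ s) = W (map f m @ (l # s) @ [])" by simp
    also have "weq \<dots> (W (map f m @ s' @ []))" by (rule weq_cong3[OF s'(2)])
    finally have "weq (W (l # w0)) (W (map f m @ s'))" using e1 weq_trans by fastforce
    moreover have "set (map f m) \<subseteq> Mset" using fM m by auto
    ultimately show ?thesis using s' by blast
  qed
qed



lemma hconj_hd_same: "a \<noteq> [] \<Longrightarrow> w \<noteq> [] \<Longrightarrow> hd (hconj a w) = hd w"
  by (cases a; cases w) (auto simp: hconj_simps)

lemma CJ: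
  assumes a: "a \<noteq> []" and w: "w \<noteq> []"
  shows "\<exists>z. weq (W [hgen a, hgen w, hgen a]) (W (map hgen z)) \<and> (\<forall>v\<in>set z. v \<noteq> [] \<and> hd v = hd w)"
proof (cases "length a \<le> length w")
  case True
  show ?thesis
    by (rule exI[of _ "[hconj a w]"]) (use hrel[OF a True] hconj_hd_same[OF a w] hconj_ne[OF w] in auto)
next
  case False
  then have lw: "length w \<le> length a" by simp
  show ?thesis
  proof (cases "hd a = hd w")
    case True
    have r: "weq (W [hgen w, hgen a, hgen w]) (W [hgen (hconj w a)])" by (rule hrel[OF w lw])
    have "weq (W ([hgen w] @ [hgen (hconj w a)] @ [hgen a])) (W ([hgen w] @ [hgen w, hgen a, hgen w] @ [hgen a]))"
      using weq_cong3[OF r] weq_sym by blast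
    also have "W ([hgen w] @ [hgen w, hgen a, hgen w] @ [hgen a]) = W ([] @ [hgen w, hgen w] @ [hgen a, hgen w, hgen a])" by simp
    also have "weq \<dots> (W ([] @ [hgen a, hgen w, hgen a]))" by (rule weq_sq_del)
    finally have "weq (W [hgen a, hgen w, hgen a]) (W (map hgen [w, hconj w a, a]))"
      using weq_sym by simp
    moreover have "\<forall>v\<in>set [w, hconj w a, a]. v \<noteq> [] \<and> hd v = hd w"
      using a w True hconj_hd_same[OF w a] hconj_ne[OF a] by auto
    ultimately show ?thesis by blast
  next
    case False
    have c: "weq (W [hgen a, hgen w]) (W [hgen w, hgen a])" by (rule hcomm[OF a w False])
    have "weq (W ([] @ [hgen a, hgen w] @ [hgen a])) (W ([] @ [hgen w, hgen a] @ [hgen a]))"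
      by (rule weq_cong3[OF c])
    also have "W ([] @ [hgen w, hgen a] @ [hgen a]) = W ([hgen w] @ [hgen a, hgen a] @ [])" by simp
    also have "weq \<dots> (W ([hgen w] @ []))" by (rule weq_sq_del)
    finally have "weq (W [hgen a, hgen w, hgen a]) (W (map hgen [w]))" by simp
    then show ?thesis using w by (intro exI[of _ "[w]"]) auto
  qed
qed

lemma conjH_word:
  assumes a: "a \<noteq> []"
  shows "\<forall>v\<in>set u. v \<noteq> [] \<and> hd v = b \<Longrightarrow>
    \<exists>u'. weq (W ([hgen a] @ map hgen u @ [hgen a])) (W (map hgen u')) \<and> (\<forall>v\<in>set u'. v \<noteq> [] \<and> hd v = b)"
proof (induction u)
  case Nil
  have "weq (W ([] @ [hgen a, hgen a] @ [])) (W ([] @ []))" by (rule weq_sq_del)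
  then show ?case by (intro exI[of _ "[]"]) simp
next
  case (Cons v u)
  obtain u'' where u'': "weq (W ([hgen a] @ map hgen u @ [hgen a])) (W (map hgen u''))"
    "\<forall>v\<in>set u''. v \<noteq> [] \<and> hd v = b" using Cons by auto
  obtain z where z: "weq (W [hgen a, hgen v, hgen a]) (W (map hgen z))" "\<forall>x\<in>set z. x \<noteq> [] \<and> hd x = hd v"
    using CJ[OF a, of v] Cons.prems by auto
  have "W ([hgen a] @ map hgen (v # u) @ [hgen a]) = W ([hgen a, hgen v] @ (map hgen u @ [hgen a]))" by simp
  also have "weq \<dots> (W ([hgen a, hgen v] @ [hgen a, hgen a] @ (map hgen u @ [hgen a])))" by (rule weq_sq_ins)
  also have "W ([hgen a, hgen v] @ [hgen a, hgen a] @ (map hgen u @ [hgen a])) = W [hgen a, hgen v, hgen a] @ W ([hgen a] @ map hgen u @ [hgen a])" by simp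
  also have "weq \<dots> (W (map hgen z) @ W (map hgen u''))" by (rule weq_app[OF z(1) u''(1)])
  finally have "weq (W ([hgen a] @ map hgen (v # u) @ [hgen a])) (W (map hgen (z @ u'')))" by simp
  moreover have "\<forall>x\<in>set (z @ u''). x \<noteq> [] \<and> hd x = b" using z(2) u''(2) Cons.prems by auto
  ultimately show ?case by blast
qed

lemma conjH_m:
  "set m \<subseteq> HA \<Longrightarrow> \<forall>v\<in>set u. v \<noteq> [] \<and> hd v = b \<Longrightarrow>
    \<exists>u'. weq (W (rev m @ map hgen u @ m)) (W (map hgen u')) \<and> (\<forall>v\<in>set u'. v \<noteq> [] \<and> hd v = b)"
proof (induction m arbitrary: u)
  case Nil then show ?case by (auto intro: weq_refl)
next
  case (Cons x m)
  have x: "x = hgen (node x)" "node x \<noteq> []" using hgen_node[of x] Cons.prems by auto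
  obtain u2 where u2: "weq (W ([hgen (node x)] @ map hgen u @ [hgen (node x)])) (W (map hgen u2))"
    "\<forall>v\<in>set u2. v \<noteq> [] \<and> hd v = b" using conjH_word[OF x(2) Cons.prems(2)] by blast
  obtain u' where u': "weq (W (rev m @ map hgen u2 @ m)) (W (map hgen u'))" "\<forall>v\<in>set u'. v \<noteq> [] \<and> hd v = b"
    using Cons.IH[OF _ u2(2)] Cons.prems(1) by auto
  have "W (rev (x # m) @ map hgen u @ x # m) = W (rev m @ ([hgen (node x)] @ map hgen u @ [hgen (node x)]) @ m)"
    using x by simp
  also have "weq \<dots> (W (rev m @ map hgen u2 @ m))" by (rule weq_cong3[OF u2(1)])
  also have "weq \<dots> (W (map hgen u'))" by (rule u'(1))
  finally show ?case using u'(2) by blast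
qed



lemma conj_map:
  assumes "\<forall>v\<in>set u. P v" "\<And>v. P v \<Longrightarrow> v \<noteq> [] \<and> weq (W [l, hgen v, l]) (W [hgen (g v)])"
  shows "weq (W ([l] @ map hgen u @ [l])) (W (map hgen (map g u)))"
proof -
  have "weq (W ([l] @ map hgen u @ [l])) (W (concat (map (\<lambda>y. [hgen (g (node y))]) (map hgen u))))"
    by (rule conj_word) (use assms in auto)
  moreover have "concat (map (\<lambda>y. [hgen (g (node y))]) (map hgen u)) = map hgen (map g u)"
    using assms by (induction u) auto
  ultimately show ?thesis by simp
qed

lemma cG0: "\<forall>v\<in>set u. v \<noteq> [] \<and> hd v = False \<Longrightarrow>
   weq (W ([G0] @ map hgen u @ [G0])) (W (map hgen (map (Cons True) u)))"
proof (rule conj_map)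
  fix v :: "bool list" assume "v \<noteq> [] \<and> hd v = False"
  then obtain r where "v = False # r" by (cases v) auto
  then show "v \<noteq> [] \<and> weq (W [G0, hgen v, G0]) (W [hgen (True # v)])" using rel_G0_0[of r] by simp
qed

lemma ch1F: "\<forall>v\<in>set u. v \<noteq> [] \<and> hd v = False \<Longrightarrow>
   weq (W ([h1] @ map hgen u @ [h1])) (W (map hgen (map id u)))"
proof (rule conj_map)
  fix v :: "bool list" assume "v \<noteq> [] \<and> hd v = False"
  then obtain r where v: "v = False # r" by (cases v) auto
  have "weq (W [hgen [True], hgen v, hgen [True]]) (W [hgen (hconj [True] v)])" by (rule hrel) (auto simp: v)
  then show "v \<noteq> [] \<and> weq (W [h1, hgen v, h1]) (W [hgen (id v)])" using v by (simp add: hconj_simps)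
qed

lemma ch1TF: "\<forall>v\<in>set u. \<exists>r. v = True # False # r \<Longrightarrow>
   weq (W ([h1] @ map hgen u @ [h1])) (W (map hgen (map (\<lambda>v. True # True # drop 2 v) u)))"
proof (rule conj_map)
  fix v :: "bool list" assume "\<exists>r. v = True # False # r"
  then obtain r where v: "v = True # False # r" by auto
  have "weq (W [hgen [True], hgen v, hgen [True]]) (W [hgen (hconj [True] v)])" by (rule hrel) (auto simp: v)
  then show "v \<noteq> [] \<and> weq (W [h1, hgen v, h1]) (W [hgen (True # True # drop 2 v)])" using v by (simp add: hconj_simps)
qed

lemma s_conj:
  assumes s: "s \<in> S6" "s \<noteq> []" "s \<noteq> [h1]" and u: "\<forall>v\<in>set u. v \<noteq> [] \<and> hd v = False"
  shows "\<exists>u'. weq (W (rev s @ map hgen u @ s)) (W (map hgen u')) \<and> (\<forall>v\<in>set u'. v \<noteq> [] \<and> hd v = True)"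
proof -
  have A: "weq (W ([G0] @ map hgen u @ [G0])) (W (map hgen (map (Cons True) u)))" by (rule cG0[OF u])
  have B: "weq (W ([h1] @ map hgen u @ [h1])) (W (map hgen u))" using ch1F[OF u] by simp
  have TF: "\<forall>v\<in>set (map (Cons True) u). \<exists>r. v = True # False # r"
    using u by (auto simp: neq_Nil_conv)
  have C: "weq (W ([h1] @ map hgen (map (Cons True) u) @ [h1])) (W (map hgen (map (\<lambda>v. True # True # drop 2 v) (map (Cons True) u))))"
    by (rule ch1TF[OF TF])
  have T1: "\<forall>v\<in>set (map (Cons True) u). v \<noteq> [] \<and> hd v = True" by auto
  have T2: "\<forall>v\<in>set (map (\<lambda>v. True # True # drop 2 v) (map (Cons True) u)). v \<noteq> [] \<and> hd v = True" by auto
  have BA: "weq (W ([G0, h1] @ map hgen u @ [h1, G0])) (W (map hgen (map (Cons True) u)))"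
  proof -
    have "W ([G0, h1] @ map hgen u @ [h1, G0]) = W ([G0] @ ([h1] @ map hgen u @ [h1]) @ [G0])" by simp
    also have "weq \<dots> (W ([G0] @ map hgen u @ [G0]))" by (rule weq_cong3[OF B])
    also have "weq \<dots> (W (map hgen (map (Cons True) u)))" by (rule A)
    finally show ?thesis .
  qed
  have CA: "weq (W ([h1, G0] @ map hgen u @ [G0, h1])) (W (map hgen (map (\<lambda>v. True # True # drop 2 v) (map (Cons True) u))))"
  proof -
    have "W ([h1, G0] @ map hgen u @ [G0, h1]) = W ([h1] @ ([G0] @ map hgen u @ [G0]) @ [h1])" by simp
    also have "weq \<dots> (W ([h1] @ map hgen (map (Cons True) u) @ [h1]))" by (rule weq_cong3[OF A])
    also have "weq \<dots> (W (map hgen (map (\<lambda>v. True # True # drop 2 v) (map (Cons True) u))))" by (rule C)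
    finally show ?thesis .
  qed
  have CBA: "weq (W ([h1, G0, h1] @ map hgen u @ [h1, G0, h1])) (W (map hgen (map (\<lambda>v. True # True # drop 2 v) (map (Cons True) u))))"
  proof -
    have "W ([h1, G0, h1] @ map hgen u @ [h1, G0, h1]) = W ([h1, G0] @ ([h1] @ map hgen u @ [h1]) @ [G0, h1])" by simp
    also have "weq \<dots> (W ([h1, G0] @ map hgen u @ [G0, h1]))" by (rule weq_cong3[OF B])
    also have "weq \<dots> (W (map hgen (map (\<lambda>v. True # True # drop 2 v) (map (Cons True) u))))" by (rule CA)
    finally show ?thesis .
  qed
  from s consider "s = [G0]" | "s = [h1, G0]" | "s = [G0, h1]" | "s = [h1, G0, h1]" unfolding S6_def by auto
  then show ?thesis
  proof cases
    case 1 then show ?thesis using A T1 by (intro exI[of _ "map (Cons True) u"]) simp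
  next
    case 2 then show ?thesis using BA T1 by (intro exI[of _ "map (Cons True) u"]) simp
  next
    case 3 then show ?thesis using CA T2 by (intro exI[of _ "map (\<lambda>v. True # True # drop 2 v) (map (Cons True) u)"]) simp
  next
    case 4 then show ?thesis using CBA T2 by (intro exI[of _ "map (\<lambda>v. True # True # drop 2 v) (map (Cons True) u)"]) simp
  qed
qed

lemma G0_conj:
  assumes w: "set w \<subseteq> insert G0 HA" and nH: "cls (W w) \<notin> Hs" and u: "\<forall>v\<in>set u. v \<noteq> [] \<and> hd v = False"
  shows "\<exists>u'. weq (W (rev w @ map hgen u @ w)) (W (map hgen u')) \<and> (\<forall>v\<in>set u'. v \<noteq> [] \<and> hd v = True)"
proof -
  obtain m s where e: "weq (W w) (W (m @ s))" and m: "set m \<subseteq> Mset" and s: "s \<in> S6"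
    using G0_decomp[OF w] by blast
  have mHA: "set m \<subseteq> HA" using m by (auto simp: Mset_def)
  have s2: "s \<noteq> [] \<and> s \<noteq> [h1]"
  proof (rule ccontr)
    assume "\<not> (s \<noteq> [] \<and> s \<noteq> [h1])"
    then have "set (m @ s) \<subseteq> HA" using mHA by (auto simp: HA_def)
    then have "cls (W (m @ s)) \<in> Hs" unfolding Hs_WS WS_def by blast
    then show False using nH weq_cls[OF e] by simp
  qed
  have er: "weq (W (rev w)) (W (rev (m @ s)))"
  proof -
    have "cls (W (rev w)) = cls (W (rev (m @ s)))"
      using inv_clsW[of w] inv_clsW[of "m @ s"] weq_cls[OF e] by simp
    then show ?thesis using cls_eq by blast
  qed
  obtain u2 where u2: "weq (W (rev m @ map hgen u @ m)) (W (map hgen u2))" "\<forall>v\<in>set u2. v \<noteq> [] \<and> hd v = False"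
    using conjH_m[OF mHA u] by blast
  obtain u' where u': "weq (W (rev s @ map hgen u2 @ s)) (W (map hgen u'))" "\<forall>v\<in>set u'. v \<noteq> [] \<and> hd v = True"
    using s_conj[OF s _ _ u2(2)] s2 by blast
  have "weq (W (rev w @ map hgen u @ w)) (W (rev (m @ s) @ map hgen u @ (m @ s)))"
    using weq_app[OF er weq_app[OF weq_refl[of "W (map hgen u)"] e]] by simp
  also have "W (rev (m @ s) @ map hgen u @ (m @ s)) = W (rev s @ (rev m @ map hgen u @ m) @ s)" by simp
  also have "weq \<dots> (W (rev s @ map hgen u2 @ s))" by (rule weq_cong3[OF u2(1)])
  also have "weq \<dots> (W (map hgen u'))" by (rule u'(1))
  finally show ?thesis using u'(2) by blast
qed



fun flipg :: "gen \<Rightarrow> gen" where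
  "flipg (Hg b r) = Hg (\<not> b) (map Not r)" | "flipg G0 = G1" | "flipg G1 = G0"

definition flipl :: "letter \<Rightarrow> letter" where "flipl x = (flipg (fst x), snd x)"

lemma flipg_flipg[simp]: "flipg (flipg g) = g" by (cases g) (auto simp: comp_def)
lemma flipl_lt[simp]: "flipl (lt g) = lt (flipg g)" by (simp add: flipl_def lt_def)
lemma flipl_ltinv[simp]: "flipl (ltinv g) = ltinv (flipg g)" by (simp add: flipl_def ltinv_def)
lemma flipl_linv[simp]: "flipl (linv x) = linv (flipl x)" by (simp add: flipl_def linv_def)
lemma flipg_hgen[simp]: "v \<noteq> [] \<Longrightarrow> flipg (hgen v) = hgen (map Not v)" by (cases v) auto
lemma map_W_flip: "map flipl (W x) = W (map flipg x)" by simp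

lemma flip_hconj: "hconj (map Not i) (map Not j) = map Not (hconj i j)"
proof (induction i arbitrary: j)
  case Nil then show ?case by (cases j) (auto simp: hconj_simps)
next
  case (Cons a i) then show ?case by (cases j) (auto simp: hconj_simps)
qed

lemma R1: "w \<noteq> [] \<Longrightarrow> [lt (hgen w), lt (hgen w)] \<in> relators" unfolding relators_def by blast
lemma R2: "i \<noteq> [] \<Longrightarrow> length i \<le> length j \<Longrightarrow> [lt (hgen i), lt (hgen j), lt (hgen i), ltinv (hgen (hconj i j))] \<in> relators"
  unfolding relators_def by blast
lemma R3: "[lt G0, lt G0] \<in> relators" "[lt G1, lt G1] \<in> relators" unfolding relators_def by blast+
lemma R4: "[lt G0, lt (hgen [True]), lt G0, lt (hgen [True]), lt G0, lt (hgen [True])] \<in> relators"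
  "[lt G1, lt (hgen [False]), lt G1, lt (hgen [False]), lt G1, lt (hgen [False])] \<in> relators"
  unfolding relators_def by blast+
lemma R5: "[lt G0, lt (hgen (True # False # r)), lt G0, ltinv (hgen (False # r))] \<in> relators"
  "[lt G0, lt (hgen (True # True # r)), lt G0, ltinv (hgen (True # True # r))] \<in> relators"
  "[lt G1, lt (hgen (False # False # r)), lt G1, ltinv (hgen (False # False # r))] \<in> relators"
  "[lt G1, lt (hgen (False # True # r)), lt G1, ltinv (hgen (True # r))] \<in> relators"
  unfolding relators_def by blast+

lemma flip_rel: assumes "r \<in> relators" shows "map flipl r \<in> relators"
  using assms[unfolded relators_def]
  apply (elim UnE)
  subgoal by clarify (simp add: R1)
  subgoal apply clarify
    apply (subgoal_tac "j \<noteq> []")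
     apply (simp add: flip_hconj hconj_ne)
     apply (metis R2 flip_hconj length_map list.map_disc_iff)
    by auto
  subgoal using R3 by auto
  subgoal using R4 by auto
  subgoal using R4 by auto
  subgoal using R5[simplified] by clarsimp
  subgoal using R5[simplified] by clarsimp
  subgoal using R5[simplified] by clarsimp
  subgoal using R5[simplified] by clarsimp
  done

lemma flip_weq: "weq u v \<Longrightarrow> weq (map flipl u) (map flipl v)"
proof (induction rule: weq.induct)
  case (weq_refl w) then show ?case by (rule weq.weq_refl)
next
  case (weq_sym u v) then show ?case using weq.weq_sym by blast
next
  case (weq_trans u v w) then show ?case using weq.weq_trans by blast
next
  case (weq_cancel u x v) then show ?case using weq.weq_cancel by simp
next
  case (weq_rel r u v) then show ?case using weq.weq_rel[OF flip_rel] by simp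
qed

lemma flip_weqW: "weq (W x) (W y) \<Longrightarrow> weq (W (map flipg x)) (W (map flipg y))"
proof -
  assume "weq (W x) (W y)"
  then have "weq (map flipl (W x)) (map flipl (W y))" by (rule flip_weq)
  then show ?thesis by (simp only: map_W_flip)
qed



lemma map_flipg_hgen: "\<forall>v\<in>set u. v \<noteq> [] \<Longrightarrow> map flipg (map hgen u) = map hgen (map (map Not) u)"
  by (induction u) auto

lemma flipg_HA: "g \<in> HA \<Longrightarrow> flipg g \<in> HA" by (auto simp: HA_def)

lemma G1_conj:
  assumes w: "set w \<subseteq> insert G1 HA" and nH: "cls (W w) \<notin> Hs" and u: "\<forall>v\<in>set u. v \<noteq> [] \<and> hd v = True"
  shows "\<exists>u'. weq (W (rev w @ map hgen u @ w)) (W (map hgen u')) \<and> (\<forall>v\<in>set u'. v \<noteq> [] \<and> hd v = False)"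
proof -
  define w' where "w' = map flipg w"
  have w': "set w' \<subseteq> insert G0 HA" using w flipg_HA by (auto simp: w'_def)
  have nH': "cls (W w') \<notin> Hs"
  proof
    assume "cls (W w') \<in> Hs"
    then obtain z where z: "cls (W w') = cls (W z)" "set z \<subseteq> HA" unfolding Hs_WS WS_def by blast
    then have "weq (W w') (W z)" using cls_eq by blast
    then have "weq (W (map flipg w')) (W (map flipg z))" by (rule flip_weqW)
    moreover have "map flipg w' = w" by (simp add: w'_def comp_def)
    moreover have "set (map flipg z) \<subseteq> HA" using z(2) flipg_HA by auto
    ultimately have "cls (W w) = cls (W (map flipg z))" "set (map flipg z) \<subseteq> HA" using weq_cls by auto
    then have "cls (W w) \<in> Hs" unfolding Hs_WS WS_def by blast
    then show False using nH by simp
  qed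
  have uF: "\<forall>v\<in>set (map (map Not) u). v \<noteq> [] \<and> hd v = False" using u by (auto simp: hd_map)
  obtain u2 where u2: "weq (W (rev w' @ map hgen (map (map Not) u) @ w')) (W (map hgen u2))"
      "\<forall>v\<in>set u2. v \<noteq> [] \<and> hd v = True"
    using G0_conj[OF w' nH' uF] by blast
  have "weq (W (map flipg (rev w' @ map hgen (map (map Not) u) @ w'))) (W (map flipg (map hgen u2)))"
    by (rule flip_weqW[OF u2(1)])
  moreover have "map flipg (rev w' @ map hgen (map (map Not) u) @ w') = rev w @ map hgen u @ w"
  proof -
    have "map flipg (map hgen (map (map Not) u)) = map hgen u"
      using map_flipg_hgen[of "map (map Not) u"] uF by (simp add: comp_def)
    then show ?thesis by (simp add: w'_def rev_map comp_def)
  qed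
  moreover have "map flipg (map hgen u2) = map hgen (map (map Not) u2)" using map_flipg_hgen u2(2) by blast
  moreover have "\<forall>v\<in>set (map (map Not) u2). v \<noteq> [] \<and> hd v = False" using u2(2) by (auto simp: hd_map)
  ultimately show ?thesis by metis
qed



lemma Hs_carrier: "Hs \<subseteq> carrier Gamma" unfolding Hs_WS by (rule WS_carrier)
lemma Hj_Hs: "Hj b \<subseteq> Hs" unfolding Hj_WS Hs_WS by (rule WS_mono) (auto simp: HA_def HB_def)
lemma Gs_carrier: "Gs j \<subseteq> carrier Gamma" unfolding Gs_WS by (rule WS_carrier)

lemma Gs_words: "x \<in> Gs j \<Longrightarrow> \<exists>w. x = cls (W w) \<and> set w \<subseteq> insert (if j mod 2 = 0 then G0 else G1) HA"
  unfolding Gs_WS WS_def by auto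

lemma Hs_closed: "a \<in> Hs \<Longrightarrow> b \<in> Hs \<Longrightarrow> a \<otimes>\<^bsub>Gamma\<^esub> b \<in> Hs"
  unfolding Hs_WS by (rule WS_mult)
lemma Hs_inv: "a \<in> Hs \<Longrightarrow> inv\<^bsub>Gamma\<^esub> a \<in> Hs"
  unfolding Hs_WS by (rule WS_inv)
lemma Hs_one: "\<one>\<^bsub>Gamma\<^esub> \<in> Hs" unfolding Hs_WS by (rule WS_one)

lemma conj_step:
  assumes x: "x \<in> Gs j" "x \<notin> Hs" and y: "y \<in> Hj (j mod 2 = 1)"
  shows "inv\<^bsub>Gamma\<^esub> x \<otimes>\<^bsub>Gamma\<^esub> y \<otimes>\<^bsub>Gamma\<^esub> x \<in> Hj (\<not> (j mod 2 = 1))"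
proof -
  obtain w where w: "x = cls (W w)" "set w \<subseteq> insert (if j mod 2 = 0 then G0 else G1) HA"
    using Gs_words[OF x(1)] by blast
  obtain u where u: "y = cls (W (map hgen u))" "\<forall>v\<in>set u. v \<noteq> [] \<and> hd v = (j mod 2 = 1)"
    using Hj_nodes[OF y] by blast
  have eq: "inv\<^bsub>Gamma\<^esub> x \<otimes>\<^bsub>Gamma\<^esub> y \<otimes>\<^bsub>Gamma\<^esub> x = cls (W (rev w @ map hgen u @ w))"
    using w(1) u(1) by (simp add: inv_clsW mult_cls)
  show ?thesis
  proof (cases "j mod 2 = 1")
    case False
    then have w0: "set w \<subseteq> insert G0 HA" using w(2) by auto
    have uF: "\<forall>v\<in>set u. v \<noteq> [] \<and> hd v = False" using u(2) False by simp
    obtain u' where u': "weq (W (rev w @ map hgen u @ w)) (W (map hgen u'))" "\<forall>v\<in>set u'. v \<noteq> [] \<and> hd v = True"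
      using G0_conj[OF w0 _ uF] x(2) w(1) by blast
    have "cls (W (rev w @ map hgen u @ w)) = cls (W (map hgen u'))" by (rule weq_cls[OF u'(1)])
    then show ?thesis using eq False nodes_Hj[OF u'(2)] by simp
  next
    case True
    then have w1: "set w \<subseteq> insert G1 HA" using w(2) by auto
    have uT: "\<forall>v\<in>set u. v \<noteq> [] \<and> hd v = True" using u(2) True by simp
    obtain u' where u': "weq (W (rev w @ map hgen u @ w)) (W (map hgen u'))" "\<forall>v\<in>set u'. v \<noteq> [] \<and> hd v = False"
      using G1_conj[OF w1 _ uT] x(2) w(1) by blast
    have "cls (W (rev w @ map hgen u @ w)) = cls (W (map hgen u'))" by (rule weq_cls[OF u'(1)])
    then show ?thesis using eq True nodes_Hj[OF u'(2)] by simp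
  qed
qed

lemma conjH_iff:
  assumes g: "g \<in> carrier Gamma" and z: "z \<in> carrier Gamma"
  shows "z \<in> conjH g \<longleftrightarrow> inv\<^bsub>Gamma\<^esub> g \<otimes>\<^bsub>Gamma\<^esub> z \<otimes>\<^bsub>Gamma\<^esub> g \<in> Hs"
proof
  assume "z \<in> conjH g"
  then obtain x where x: "x \<in> Hs" "z = g \<otimes>\<^bsub>Gamma\<^esub> x \<otimes>\<^bsub>Gamma\<^esub> inv\<^bsub>Gamma\<^esub> g"
    unfolding conjH_def by blast
  have xc: "x \<in> carrier Gamma" using x(1) Hs_carrier by blast
  have "inv\<^bsub>Gamma\<^esub> g \<otimes>\<^bsub>Gamma\<^esub> z \<otimes>\<^bsub>Gamma\<^esub> g = x"
    using g xc unfolding x(2) by (metis Gm.inv_closed Gm.l_inv Gm.l_one Gm.m_assoc Gm.m_closed Gm.r_inv Gm.r_one)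
  then show "inv\<^bsub>Gamma\<^esub> g \<otimes>\<^bsub>Gamma\<^esub> z \<otimes>\<^bsub>Gamma\<^esub> g \<in> Hs" using x(1) by simp
next
  assume h: "inv\<^bsub>Gamma\<^esub> g \<otimes>\<^bsub>Gamma\<^esub> z \<otimes>\<^bsub>Gamma\<^esub> g \<in> Hs"
  have "g \<otimes>\<^bsub>Gamma\<^esub> (inv\<^bsub>Gamma\<^esub> g \<otimes>\<^bsub>Gamma\<^esub> z \<otimes>\<^bsub>Gamma\<^esub> g) \<otimes>\<^bsub>Gamma\<^esub> inv\<^bsub>Gamma\<^esub> g = z"
    using g z by (metis Gm.inv_closed Gm.l_inv Gm.l_one Gm.m_assoc Gm.m_closed Gm.r_inv Gm.r_one)
  then show "z \<in> conjH g" unfolding conjH_def using h by force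
qed

lemma Tprod_carrier: "Tprod j k \<subseteq> carrier Gamma"
proof (induction k arbitrary: j)
  case 0 then show ?case by simp
next
  case (Suc k) then show ?case using Gs_carrier by fastforce
qed

lemma inv_conj_mult:
  assumes "a \<in> carrier Gamma" "b \<in> carrier Gamma" "c \<in> carrier Gamma"
  shows "inv\<^bsub>Gamma\<^esub> (a \<otimes>\<^bsub>Gamma\<^esub> b) \<otimes>\<^bsub>Gamma\<^esub> c \<otimes>\<^bsub>Gamma\<^esub> (a \<otimes>\<^bsub>Gamma\<^esub> b)
       = inv\<^bsub>Gamma\<^esub> b \<otimes>\<^bsub>Gamma\<^esub> (inv\<^bsub>Gamma\<^esub> a \<otimes>\<^bsub>Gamma\<^esub> c \<otimes>\<^bsub>Gamma\<^esub> a) \<otimes>\<^bsub>Gamma\<^esub> b"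
  using assms by (simp add: Gm.inv_mult_group Gm.m_assoc)

lemma Tprod_conj: "g \<in> Tprod j k \<Longrightarrow> y \<in> Hj (j mod 2 = 1) \<Longrightarrow> inv\<^bsub>Gamma\<^esub> g \<otimes>\<^bsub>Gamma\<^esub> y \<otimes>\<^bsub>Gamma\<^esub> g \<in> Hs"
proof (induction k arbitrary: j g y)
  case 0
  then have "y \<in> carrier Gamma" using Hj_Hs Hs_carrier by blast
  then show ?case using 0 Hj_Hs by auto
next
  case (Suc k)
  then obtain x g' where xg: "g = x \<otimes>\<^bsub>Gamma\<^esub> g'" "x \<in> Gs j" "x \<notin> Hs" "g' \<in> Tprod (Suc j) k" by auto
  have c: "x \<in> carrier Gamma" "g' \<in> carrier Gamma" "y \<in> carrier Gamma"
    using xg Gs_carrier Tprod_carrier Suc.prems Hj_Hs Hs_carrier by blast+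
  have z: "inv\<^bsub>Gamma\<^esub> x \<otimes>\<^bsub>Gamma\<^esub> y \<otimes>\<^bsub>Gamma\<^esub> x \<in> Hj (Suc j mod 2 = 1)"
  proof -
    have "(\<not> (j mod 2 = 1)) = (Suc j mod 2 = 1)" by presburger
    then show ?thesis using conj_step[OF xg(2,3) Suc.prems(2)] by simp
  qed
  show ?case using Suc.IH[OF xg(4) z] inv_conj_mult[OF c] xg(1) by simp
qed



lemma one_carrier: "\<one>\<^bsub>Gamma\<^esub> \<in> carrier Gamma" by simp

lemma T_carrier: "T j k \<subseteq> carrier Gamma"
  unfolding T_def using Hs_carrier Tprod_carrier by auto

lemma K_mem: "y \<in> K j \<longleftrightarrow> (\<forall>k. \<forall>g\<in>T j k. y \<in> conjH g)"
  unfolding K_def C_def by simp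

lemma K_C: "y \<in> K j \<Longrightarrow> y \<in> C j k" unfolding K_def by simp

lemma K_Hs: "y \<in> K j \<Longrightarrow> y \<in> Hs"
proof -
  assume "y \<in> K j"
  then have "y \<in> C j 0" by (rule K_C)
  then have "y \<in> conjH \<one>\<^bsub>Gamma\<^esub>" unfolding C_def T_def using Hs_one by simp
  then obtain x where x: "x \<in> Hs" "y = \<one>\<^bsub>Gamma\<^esub> \<otimes>\<^bsub>Gamma\<^esub> x \<otimes>\<^bsub>Gamma\<^esub> inv\<^bsub>Gamma\<^esub> \<one>\<^bsub>Gamma\<^esub>"
    unfolding conjH_def by blast
  then have "x \<in> carrier Gamma" using Hs_carrier by blast
  then have "y = x" using x(2) by simp
  then show "y \<in> Hs" using x(1) by simp
qed

lemma conjH_Hs: "g \<in> Hs \<Longrightarrow> z \<in> Hs \<Longrightarrow> z \<in> conjH g"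
proof -
  assume g: "g \<in> Hs" and z: "z \<in> Hs"
  have gc: "g \<in> carrier Gamma" and zc: "z \<in> carrier Gamma" using g z Hs_carrier by blast+
  have "inv\<^bsub>Gamma\<^esub> g \<otimes>\<^bsub>Gamma\<^esub> z \<otimes>\<^bsub>Gamma\<^esub> g \<in> Hs" using g z Hs_closed Hs_inv by simp
  then show ?thesis using conjH_iff[OF gc zc] by simp
qed

lemma Hj_sub_K: "Hj (j mod 2 = 1) \<subseteq> K j"
proof
  fix y assume y: "y \<in> Hj (j mod 2 = 1)"
  then have yH: "y \<in> Hs" and yc: "y \<in> carrier Gamma" using Hj_Hs Hs_carrier by blast+
  show "y \<in> K j" unfolding K_mem
  proof (intro allI ballI)
    fix k g assume g: "g \<in> T j k"
    show "y \<in> conjH g"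
    proof (cases "k = 0")
      case True then show ?thesis using g yH conjH_Hs by (simp add: T_def)
    next
      case False
      then have g': "g \<in> Tprod j k" using g by (simp add: T_def)
      then have "g \<in> carrier Gamma" using Tprod_carrier by blast
      then show ?thesis using conjH_iff yc Tprod_conj[OF g' y] by blast
    qed
  qed
qed

lemma transfer:
  assumes y: "y \<in> K j" and x: "x \<in> Gs j" "x \<notin> Hs"
  shows "inv\<^bsub>Gamma\<^esub> x \<otimes>\<^bsub>Gamma\<^esub> y \<otimes>\<^bsub>Gamma\<^esub> x \<in> K (Suc j)"
proof -
  have xc: "x \<in> carrier Gamma" using x Gs_carrier by blast
  have yc: "y \<in> carrier Gamma" using K_Hs[OF y] Hs_carrier by blast
  have zc: "inv\<^bsub>Gamma\<^esub> x \<otimes>\<^bsub>Gamma\<^esub> y \<otimes>\<^bsub>Gamma\<^esub> x \<in> carrier Gamma" using xc yc by simp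
  have x1: "x \<otimes>\<^bsub>Gamma\<^esub> \<one>\<^bsub>Gamma\<^esub> \<in> T j 1" using x by (auto simp: T_def)
  have "y \<in> conjH (x \<otimes>\<^bsub>Gamma\<^esub> \<one>\<^bsub>Gamma\<^esub>)" using y x1 K_mem by blast
  then have zH: "inv\<^bsub>Gamma\<^esub> x \<otimes>\<^bsub>Gamma\<^esub> y \<otimes>\<^bsub>Gamma\<^esub> x \<in> Hs" using conjH_iff xc yc by simp
  show ?thesis unfolding K_mem
  proof (intro allI ballI)
    fix k g assume g: "g \<in> T (Suc j) k"
    show "inv\<^bsub>Gamma\<^esub> x \<otimes>\<^bsub>Gamma\<^esub> y \<otimes>\<^bsub>Gamma\<^esub> x \<in> conjH g"
    proof (cases k)
      case 0 then show ?thesis using g zH conjH_Hs by (simp add: T_def)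
    next
      case (Suc k')
      then have g': "g \<in> Tprod (Suc j) k" using g by (simp add: T_def)
      then have gc: "g \<in> carrier Gamma" using Tprod_carrier by blast
      have "x \<otimes>\<^bsub>Gamma\<^esub> g \<in> T j (Suc k)" using g' x by (auto simp: T_def)
      then have "y \<in> conjH (x \<otimes>\<^bsub>Gamma\<^esub> g)" using y K_mem by blast
      then have "inv\<^bsub>Gamma\<^esub> (x \<otimes>\<^bsub>Gamma\<^esub> g) \<otimes>\<^bsub>Gamma\<^esub> y \<otimes>\<^bsub>Gamma\<^esub> (x \<otimes>\<^bsub>Gamma\<^esub> g) \<in> Hs"
        using conjH_iff xc gc yc by simp
      then have "inv\<^bsub>Gamma\<^esub> g \<otimes>\<^bsub>Gamma\<^esub> (inv\<^bsub>Gamma\<^esub> x \<otimes>\<^bsub>Gamma\<^esub> y \<otimes>\<^bsub>Gamma\<^esub> x) \<otimes>\<^bsub>Gamma\<^esub> g \<in> Hs"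
        using inv_conj_mult[OF xc gc yc] by simp
      then show ?thesis using conjH_iff gc zc by simp
    qed
  qed
qed

lemma Gs_SS: "Gs (Suc (Suc j)) = Gs j" unfolding Gs_def by (simp add: mod_Suc_eq)

lemma Tprod_SS: "Tprod (Suc (Suc j)) k = Tprod j k"
  by (induction k arbitrary: j) (simp_all add: Gs_SS)

lemma K_SS: "K (Suc (Suc j)) = K j"
  unfolding K_def C_def T_def by (simp only: Tprod_SS)



definition agree :: "nat \<Rightarrow> (nat \<Rightarrow> bool) \<Rightarrow> (nat \<Rightarrow> bool) \<Rightarrow> bool" where
  "agree n pp qq = (\<forall>k<n. pp k = qq k)"

lemma agree_0[simp]: "agree 0 pp qq" by (simp add: agree_def)
lemma agree_Suc: "agree n pp qq \<Longrightarrow> agree (Suc n) (scons a pp) (scons a qq)"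
  by (auto simp: agree_def less_Suc_eq_0_disj)
lemma agree_swap: "agree n (scons a pp) (scons a qq) \<Longrightarrow> agree n (scons b pp) (scons b qq)"
proof (unfold agree_def, intro allI impI)
  fix k assume h: "\<forall>k<n. scons a pp k = scons a qq k" and k: "k < n"
  show "scons b pp k = scons b qq k"
  proof (cases k)
    case (Suc m) then show ?thesis using h k by (metis scons_Suc)
  qed simp
qed

lemma ev:
  "g0act (scons False r) = scons True (scons False r)"
  "g0act (scons True (scons False r)) = scons False r"
  "g1act (scons True r) = scons False (scons True r)"
  "g1act (scons False (scons True r)) = scons True r"
  "hact [True] (scons True (scons b r)) = scons True (scons (\<not> b) r)"
  "hact [False] (scons False (scons b r)) = scons False (scons (\<not> b) r)"
  by (simp_all add: g0act_def g1act_def)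

lemma scons_U: "U 0 = a \<Longrightarrow> U = scons a (stl U)" by (simp add: scons_stl')

abbreviation h0 :: gen where "h0 \<equiv> Hg False []"

lemma notHs:
  assumes "wact (W w) s 0 \<noteq> s 0" shows "cls (W w) \<notin> Hs"
  using Hs_bit0 assms by blast

lemma inG: "set w \<subseteq> insert (if j mod 2 = 0 then G0 else G1) HA \<Longrightarrow> cls (W w) \<in> Gs j"
  unfolding Gs_WS WS_def by auto

lemma z_cls: "inv\<^bsub>Gamma\<^esub> (cls (W x)) \<otimes>\<^bsub>Gamma\<^esub> cls w \<otimes>\<^bsub>Gamma\<^esub> cls (W x) = cls (W (rev x) @ w @ W x)"
  by (simp add: inv_clsW mult_cls)

lemma K_act:
  "\<forall>y w s. (y \<in> K 0 \<longrightarrow> y = cls w \<longrightarrow> s 0 \<longrightarrow> agree n (wact w s) s)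
         \<and> (y \<in> K 1 \<longrightarrow> y = cls w \<longrightarrow> \<not> s 0 \<longrightarrow> agree n (wact w s) s)"
proof (induction n)
  case 0 then show ?case by simp
next
  case (Suc n)
  note IH0 = Suc.IH[rule_format, THEN conjunct1, rule_format]
  note IH1 = Suc.IH[rule_format, THEN conjunct2, rule_format]
  show ?case
  proof (intro allI conjI impI)
    fix y and w :: word and s :: "nat \<Rightarrow> bool" assume y: "y \<in> K 0" "y = cls w" and s0: "s 0"
    obtain b r where s: "s = scons True (scons b r)" using s_expand[of s] s0 by auto
    show "agree (Suc n) (wact w s) s"
    proof (cases b)
      case False
      define x where "x = cls (W [G0])"
      have xG: "x \<in> Gs 0" unfolding x_def by (rule inG) (auto simp: HA_def)
      have xH: "x \<notin> Hs" unfolding x_def by (rule notHs[of _ "\<lambda>_. False"]) (simp add: lt_def g0act_def)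
      define zw where "zw = W [G0] @ w @ W [G0]"
      have z: "cls zw \<in> K 1" using transfer[OF y(1) xG xH] z_cls[of "[G0]" w] y(2) x_def zw_def by simp
      define t where "t = scons False r"
      have ag: "agree n (wact zw t) t" using IH1[OF z refl] by (simp add: t_def)
      have U0: "wact zw t 0 = False" using Hs_bit0[OF K_Hs[OF z] refl, of t] by (simp add: t_def)
      have "wact zw t = g0act (wact w s)" using s False by (simp add: zw_def wact_app lt_def t_def ev)
      then have "wact w s = g0act (wact zw t)" by (metis g0_inv)
      also have "\<dots> = scons True (wact zw t)"
        using scons_U[of "wact zw t", OF U0] ev(1) by metis
      finally show ?thesis using agree_Suc[OF ag] s False by (simp add: t_def)
    next
      case True
      define x where "x = cls (W [h1, G0])"
      have xG: "x \<in> Gs 0" unfolding x_def by (rule inG) (auto simp: HA_def)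
      have xH: "x \<notin> Hs" unfolding x_def by (rule notHs[of _ "\<lambda>_. False"]) (simp add: lt_def g0act_def)
      define zw where "zw = W [G0, h1] @ w @ W [h1, G0]"
      have z: "cls zw \<in> K 1" using transfer[OF y(1) xG xH] z_cls[of "[h1, G0]" w] y(2) x_def zw_def by simp
      define t where "t = scons False r"
      have ag: "agree n (wact zw t) t" using IH1[OF z refl] by (simp add: t_def)
      have U0: "wact zw t 0 = False" using Hs_bit0[OF K_Hs[OF z] refl, of t] by (simp add: t_def)
      have "wact zw t = g0act (hact [True] (wact w s))" using s True by (simp add: zw_def wact_app lt_def t_def ev)
      then have "wact w s = hact [True] (g0act (wact zw t))" by (metis g0_inv hact_inv)
      also have "\<dots> = scons True (scons True (stl (wact zw t)))"
        using scons_U[of "wact zw t", OF U0] ev(1,5) by (metis (full_types))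
      finally have e: "wact w s = scons True (scons True (stl (wact zw t)))" .
      have "agree n (scons False (stl (wact zw t))) (scons False r)" using ag scons_U[of "wact zw t", OF U0] by (simp add: t_def)
      then have "agree n (scons True (stl (wact zw t))) (scons True r)" by (rule agree_swap)
      then show ?thesis using agree_Suc e s True by simp
    qed
  next
    fix y and w :: word and s :: "nat \<Rightarrow> bool" assume y: "y \<in> K 1" "y = cls w" and s0: "\<not> s 0"
    obtain b r where s: "s = scons False (scons b r)" using s_expand[of s] s0 by auto
    show "agree (Suc n) (wact w s) s"
    proof (cases b)
      case True
      define x where "x = cls (W [G1])"
      have xG: "x \<in> Gs 1" unfolding x_def by (rule inG) (auto simp: HA_def)
      have xH: "x \<notin> Hs" unfolding x_def by (rule notHs[of _ "\<lambda>_. True"]) (simp add: lt_def g1act_def)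
      define zw where "zw = W [G1] @ w @ W [G1]"
      have z: "cls zw \<in> K 0" using transfer[OF y(1) xG xH] z_cls[of "[G1]" w] y(2) x_def zw_def K_SS[of 0] by simp
      define t where "t = scons True r"
      have ag: "agree n (wact zw t) t" using IH0[OF z refl] by (simp add: t_def)
      have U0: "wact zw t 0 = True" using Hs_bit0[OF K_Hs[OF z] refl, of t] by (simp add: t_def)
      have "wact zw t = g1act (wact w s)" using s True by (simp add: zw_def wact_app lt_def t_def ev)
      then have "wact w s = g1act (wact zw t)" by (metis g1_inv)
      also have "\<dots> = scons False (wact zw t)"
        using scons_U[of "wact zw t", OF U0] ev(3) by metis
      finally show ?thesis using agree_Suc[OF ag] s True by (simp add: t_def)
    next
      case False
      define x where "x = cls (W [h0, G1])"
      have xG: "x \<in> Gs 1" unfolding x_def by (rule inG) (auto simp: HA_def)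
      have xH: "x \<notin> Hs" unfolding x_def by (rule notHs[of _ "\<lambda>_. True"]) (simp add: lt_def g1act_def)
      define zw where "zw = W [G1, h0] @ w @ W [h0, G1]"
      have z: "cls zw \<in> K 0" using transfer[OF y(1) xG xH] z_cls[of "[h0, G1]" w] y(2) x_def zw_def K_SS[of 0] by simp
      define t where "t = scons True r"
      have ag: "agree n (wact zw t) t" using IH0[OF z refl] by (simp add: t_def)
      have U0: "wact zw t 0 = True" using Hs_bit0[OF K_Hs[OF z] refl, of t] by (simp add: t_def)
      have "wact zw t = g1act (hact [False] (wact w s))" using s False by (simp add: zw_def wact_app lt_def t_def ev)
      then have "wact w s = hact [False] (g1act (wact zw t))" by (metis g1_inv hact_inv)
      also have "\<dots> = scons False (scons False (stl (wact zw t)))"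
        using scons_U[of "wact zw t", OF U0] ev(3,6) by (metis (full_types))
      finally have e: "wact w s = scons False (scons False (stl (wact zw t)))" .
      have "agree n (scons True (stl (wact zw t))) (scons True r)" using ag scons_U[of "wact zw t", OF U0] by (simp add: t_def)
      then have "agree n (scons False (stl (wact zw t))) (scons False r)" by (rule agree_swap)
      then show ?thesis using agree_Suc e s False by simp
    qed
  qed
qed



lemma K_triv0: "y \<in> K 0 \<Longrightarrow> y = cls w \<Longrightarrow> s 0 = (\<not> False) \<Longrightarrow> wact w s = s"
proof -
  assume a: "y \<in> K 0" "y = cls w" "s 0 = (\<not> False)"
  show ?thesis
  proof
    fix k
    have "agree (Suc k) (wact w s) s" using K_act[of "Suc k"] a by auto
    then show "wact w s k = s k" by (simp add: agree_def)
  qed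
qed

lemma K_triv1: "y \<in> K 1 \<Longrightarrow> y = cls w \<Longrightarrow> s 0 = (\<not> True) \<Longrightarrow> wact w s = s"
proof -
  assume a: "y \<in> K 1" "y = cls w" "s 0 = (\<not> True)"
  show ?thesis
  proof
    fix k
    have "agree (Suc k) (wact w s) s" using K_act[of "Suc k"] a by auto
    then show "wact w s k = s k" by (simp add: agree_def)
  qed
qed

lemma K0_eq: "K 0 = Hj False"
proof
  show "K 0 \<subseteq> Hj False"
  proof
    fix y assume y: "y \<in> K 0"
    show "y \<in> Hj False" by (rule Hj_of_trivial[OF K_Hs[OF y]]) (rule K_triv0[OF y])
  qed
  show "Hj False \<subseteq> K 0" using Hj_sub_K[of 0] by simp
qed

lemma K1_eq: "K 1 = Hj True"
proof
  show "K 1 \<subseteq> Hj True"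
  proof
    fix y assume y: "y \<in> K 1"
    show "y \<in> Hj True" by (rule Hj_of_trivial[OF K_Hs[OF y]]) (rule K_triv1[OF y])
  qed
  show "Hj True \<subseteq> K 1" using Hj_sub_K[of 1] by simp
qed

lemma ker_sub: "kerGamma \<subseteq> K j"
  unfolding kerGamma_def K_def C_def using T_carrier by blast

lemma one_ker: "\<one>\<^bsub>Gamma\<^esub> \<in> kerGamma"
  unfolding kerGamma_def
proof
  fix g assume g: "g \<in> carrier Gamma"
  have "inv\<^bsub>Gamma\<^esub> g \<otimes>\<^bsub>Gamma\<^esub> \<one>\<^bsub>Gamma\<^esub> \<otimes>\<^bsub>Gamma\<^esub> g = \<one>\<^bsub>Gamma\<^esub>" using g by simp
  then show "\<one>\<^bsub>Gamma\<^esub> \<in> conjH g" using conjH_iff[OF g one_carrier] Hs_one by simp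
qed

theorem lemma4p3:
  shows "K 0 = Hj False \<and> K 1 = Hj True \<and> kerGamma = K 0 \<inter> K 1
         \<and> K 0 \<inter> K 1 = Hj False \<inter> Hj True \<and> Hj False \<inter> Hj True = {\<one>\<^bsub>Gamma\<^esub>}"
proof (intro conjI)
  show "K 0 = Hj False" by (rule K0_eq)
  show "K 1 = Hj True" by (rule K1_eq)
  show "K 0 \<inter> K 1 = Hj False \<inter> Hj True" by (simp only: K0_eq K1_eq)
  show "Hj False \<inter> Hj True = {\<one>\<^bsub>Gamma\<^esub>}" by (rule Hj_inter)
  show "kerGamma = K 0 \<inter> K 1"
  proof
    show "kerGamma \<subseteq> K 0 \<inter> K 1" using ker_sub by blast
    have "K 0 \<inter> K 1 = {\<one>\<^bsub>Gamma\<^esub>}" by (simp only: K0_eq K1_eq Hj_inter)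
    then show "K 0 \<inter> K 1 \<subseteq> kerGamma" using one_ker by simp
  qed
qed


end
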